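(* For $\varepsilon\in(0,1)$ and $d\in\mathbb{N}$ we have $$N_2^{\rm per}(\varepsilon,d)\ge\frac{1}{1+\varepsilon^2}\left(\frac32\right)^d\quad\text{and}\quad N_2^{\rm per,w+}(\varepsilon,d)\ge(1-\varepsilon^2)\left(\frac32\right)^d.$$ Moreover, for any $\varepsilon_0\in(0,1)$ there exists $c>0$ such that $N_2^{\rm per,w}(\varepsilon,d)\ge c\,1.0628^d$ for all $d\in\mathbb{N}$ and all $\varepsilon\in(0,\varepsilon_0)$.
   Context: For $x,y\in[0,1)$ define $I(x,y)=[x,y)$ if $x\le y$ and $I(x,y)=[0,y)\cup[x,1)$ if $x>y$; for $\boldsymbol{x},\boldsymbol{y}\in[0,1)^d$ let $B(\boldsymbol{x},\boldsymbol{y})=I(x_1,y_1)\times\cdots\times I(x_d,y_d)$. For a point set $\mathcal{P}=\{\boldsymbol{x}_1,\ldots,\boldsymbol{x}_N\}\subset[0,1)^d$ with real weights $\boldsymbol{w}=(w_1,\ldots,w_N)$, let $\Delta_{\mathcal{P}}(B,\boldsymbol{w})=\sum_{j:\boldsymbol{x}_j\in B}w_j-\mathrm{volume}(B)$ and $L_{2,N}^{\rm per}(\mathcal{P},\boldsymbol{w})=\big(\int_{[0,1]^d}\int_{[0,1]^d}\Delta_{\mathcal{P}}(B(\boldsymbol{x},\boldsymbol{y}),\boldsymbol{w})^2\,{\rm d}\boldsymbol{x}\,{\rm d}\boldsymbol{y}\big)^{1/2}$; write $L_{2,N}^{\rm per}(\mathcal{P})$ for equal weights $w_j=1/N$. Define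 $N_2^{\rm per}(\varepsilon,d)=\min\{N\in\mathbb{N}:\exists\,\mathcal{P}\subseteq[0,1)^d,\ |\mathcal{P}|=N,\ L_{2,N}^{\rm per}(\mathcal{P})\le\varepsilon\,3^{-d/2}\}$; $N_2^{\rm per,w}(\varepsilon,d)$ is defined in the same way but with the minimum over all $N$ for which there exist an $N$-point set $\mathcal{P}$ and arbitrary real weights $\boldsymbol{w}$ with $L_{2,N}^{\rm per}(\mathcal{P},\boldsymbol{w})\le\varepsilon\,3^{-d/2}$; and $N_2^{\rm per,w+}(\varepsilon,d)$ is defined in the same way with only positive weights allowed. (Here $3^{-d/2}$ is the periodic $L_2$-discrepancy of the empty point set.) *)

theory Defs
  imports "HOL-Analysis.Analysis"
begin

definition in_perI :: "real \<Rightarrow> real \<Rightarrow> real \<Rightarrow> bool" where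
  "in_perI x y t = (if x \<le> y then x \<le> t \<and> t < y
                    else (0 \<le> t \<and> t < y) \<or> (x \<le> t \<and> t < 1))"

definition len_perI :: "real \<Rightarrow> real \<Rightarrow> real" where
  "len_perI x y = (if x \<le> y then y - x else 1 - x + y)"

definition in_perB :: "nat \<Rightarrow> (nat \<Rightarrow> real) \<Rightarrow> (nat \<Rightarrow> real) \<Rightarrow> (nat \<Rightarrow> real) \<Rightarrow> bool" where
  "in_perB d x y p = (\<forall>i<d. in_perI (x i) (y i) (p i))"

definition vol_perB :: "nat \<Rightarrow> (nat \<Rightarrow> real) \<Rightarrow> (nat \<Rightarrow> real) \<Rightarrow> real" where
  "vol_perB d x y = (\<Prod>i<d. len_perI (x i) (y i))"

text \<open>Local discrepancy of the weighted point set P_0,...,P_{N-1} (P j i = i-th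
  coordinate of the j-th point) with weights w on the box B(x,y).\<close>
definition disc_perB ::
  "nat \<Rightarrow> nat \<Rightarrow> (nat \<Rightarrow> nat \<Rightarrow> real) \<Rightarrow> (nat \<Rightarrow> real) \<Rightarrow> (nat \<Rightarrow> real) \<Rightarrow> (nat \<Rightarrow> real) \<Rightarrow> real" where
  "disc_perB d N P w x y = (\<Sum>j<N. if in_perB d x y (P j) then w j else 0) - vol_perB d x y"

definition unit_cube :: "nat \<Rightarrow> (nat \<Rightarrow> real) measure" where
  "unit_cube d = PiM {..<d} (\<lambda>_. restrict_space lborel {0..1::real})"

definition L2per :: "nat \<Rightarrow> nat \<Rightarrow> (nat \<Rightarrow> nat \<Rightarrow> real) \<Rightarrow> (nat \<Rightarrow> real) \<Rightarrow> real" where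
  "L2per d N P w = sqrt (\<integral>x. (\<integral>y. (disc_perB d N P w x y)\<^sup>2 \<partial>unit_cube d) \<partial>unit_cube d)"

definition point_set_in :: "nat \<Rightarrow> nat \<Rightarrow> (nat \<Rightarrow> nat \<Rightarrow> real) \<Rightarrow> bool" where
  "point_set_in d N P = (\<forall>j<N. \<forall>i<d. 0 \<le> P j i \<and> P j i < 1)"

definition N2per :: "real \<Rightarrow> nat \<Rightarrow> nat" where
  "N2per \<epsilon> d = (LEAST N. 1 \<le> N \<and> (\<exists>P. point_set_in d N P \<and>
       L2per d N P (\<lambda>_. 1 / real N) \<le> \<epsilon> * 3 powr (- real d / 2)))"

definition N2per_w :: "real \<Rightarrow> nat \<Rightarrow> nat" where
  "N2per_w \<epsilon> d = (LEAST N. 1 \<le> N \<and> (\<exists>P w. point_set_in d N P \<and>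
       L2per d N P w \<le> \<epsilon> * 3 powr (- real d / 2)))"

definition N2per_wpos :: "real \<Rightarrow> nat \<Rightarrow> nat" where
  "N2per_wpos \<epsilon> d = (LEAST N. 1 \<le> N \<and> (\<exists>P w. point_set_in d N P \<and> (\<forall>j<N. 0 < w j) \<and>
       L2per d N P w \<le> \<epsilon> * 3 powr (- real d / 2)))"

end

theory Submission
  imports Defs "HOL-Real_Asymp.Real_Asymp"
begin

definition U :: "real measure" where "U = restrict_space lborel {0..1::real}"

lemma emeasure_U: "emeasure U (space U) = 1"
  unfolding U_def by (simp add: emeasure_restrict_space space_restrict_space)

lemma fin_U: "finite_measure U"
  by (rule finite_measureI) (simp add: emeasure_U)

lemma space_U: "space U = {0..1}"
  unfolding U_def by (simp add: space_restrict_space)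

lemma sets_U: "sets U = sets (restrict_space borel {0..1::real})"
  unfolding U_def by (simp add: sets_restrict_space)

interpretation PU: product_sigma_finite "\<lambda>_::nat. U"
  unfolding product_sigma_finite_def using fin_U
  by (simp add: finite_measure.axioms(1))

lemma unit_cube_eq: "unit_cube d = PiM {..<d} (\<lambda>_. U)"
  unfolding unit_cube_def U_def ..

lemma LU:
  fixes g :: "real \<Rightarrow> real"
  assumes m: "g \<in> borel_measurable borel" and b: "\<And>x. x \<in> {0..1} \<Longrightarrow> \<bar>g x\<bar> \<le> B"
  shows "integrable U g" and "(\<integral>x. g x \<partial>U) = integral {0..1} g"
proof -
  interpret finite_measure U by (rule fin_U)
  have mU: "g \<in> borel_measurable U"
    unfolding U_def by (rule measurable_restrict_space1) (simp add: m)
  show iU: "integrable U g"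
    by (rule integrable_const_bound[where B=B]) (auto simp: space_U b intro!: mU)
  have si: "set_integrable lborel {0..1} g"
    using iU unfolding U_def set_integrable_def
    by (subst (asm) integrable_restrict_space) auto
  have "(\<integral>x. g x \<partial>U) = (LINT x:{0..1}|lborel. g x)"
    unfolding U_def set_lebesgue_integral_def
    by (subst integral_restrict_space) auto
  also have "\<dots> = integral {0..1} g"
    by (rule set_borel_integral_eq_integral(2)[OF si])
  finally show "(\<integral>x. g x \<partial>U) = integral {0..1} g" .
qed


lemma space_cube: "x \<in> space (unit_cube d) \<Longrightarrow> i < d \<Longrightarrow> x i \<in> {0..1}"
  unfolding unit_cube_eq by (auto simp: space_PiM space_U PiE_def Pi_def)

lemma PI:
  fixes f :: "nat \<Rightarrow> real \<Rightarrow> real \<Rightarrow> real" and h :: "nat \<Rightarrow> real \<Rightarrow> real"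
  assumes f_int: "\<And>i a. i < d \<Longrightarrow> a \<in> {0..1} \<Longrightarrow> integrable U (f i a)"
    and f_h: "\<And>i a. i < d \<Longrightarrow> a \<in> {0..1} \<Longrightarrow> (\<integral>y. f i a y \<partial>U) = h i a"
    and h_int: "\<And>i. i < d \<Longrightarrow> integrable U (h i)"
  shows "\<And>x. x \<in> space (unit_cube d) \<Longrightarrow> integrable (unit_cube d) (\<lambda>y. \<Prod>i<d. f i (x i) (y i))"
    and "\<And>x. x \<in> space (unit_cube d) \<Longrightarrow> (\<integral>y. (\<Prod>i<d. f i (x i) (y i)) \<partial>unit_cube d) = (\<Prod>i<d. h i (x i))"
    and "integrable (unit_cube d) (\<lambda>x. \<Prod>i<d. h i (x i))"
    and "(\<integral>x. (\<Prod>i<d. h i (x i)) \<partial>unit_cube d) = (\<Prod>i<d. integral\<^sup>L U (h i))"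
proof -
  fix x assume x: "x \<in> space (unit_cube d)"
  show "integrable (unit_cube d) (\<lambda>y. \<Prod>i<d. f i (x i) (y i))"
    unfolding unit_cube_eq
    by (rule PU.product_integrable_prod[where f="\<lambda>i. f i (x i)"]) (auto intro!: f_int space_cube[OF x])
  have "(\<integral>y. (\<Prod>i<d. f i (x i) (y i)) \<partial>unit_cube d) = (\<Prod>i<d. integral\<^sup>L U (f i (x i)))"
    unfolding unit_cube_eq
    by (rule PU.product_integral_prod[where f="\<lambda>i. f i (x i)"]) (auto intro!: f_int space_cube[OF x])
  also have "\<dots> = (\<Prod>i<d. h i (x i))"
    by (intro prod.cong refl f_h space_cube[OF x]) auto
  finally show "(\<integral>y. (\<Prod>i<d. f i (x i) (y i)) \<partial>unit_cube d) = (\<Prod>i<d. h i (x i))" .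
next
  show "integrable (unit_cube d) (\<lambda>x. \<Prod>i<d. h i (x i))"
    unfolding unit_cube_eq
    by (rule PU.product_integrable_prod) (auto intro!: h_int)
  show "(\<integral>x. (\<Prod>i<d. h i (x i)) \<partial>unit_cube d) = (\<Prod>i<d. integral\<^sup>L U (h i))"
    unfolding unit_cube_eq
    by (rule PU.product_integral_prod) (auto intro!: h_int)
qed


definition iI :: "real \<Rightarrow> real \<Rightarrow> real \<Rightarrow> real" where
  "iI a b t = (if in_perI a b t then 1 else 0)"

lemma hk_piece:
  fixes f g F :: "real \<Rightarrow> real"
  assumes "a \<le> b" "\<And>x. a < x \<Longrightarrow> x < b \<Longrightarrow> g x = f x"
    "\<And>x. (F has_real_derivative f x) (at x)" "continuous_on {a..b} f"
  shows "(g has_integral (F b - F a)) {a..b}"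
proof -
  have "(f has_integral (F b - F a)) {a..b}"
    using assms(1,3)
    by (intro fundamental_theorem_of_calculus)
       (auto simp: has_real_derivative_iff_has_vector_derivative[symmetric] intro: has_field_derivative_at_within)
  then show ?thesis
    by (rule has_integral_spike_finite[where S="{a,b}", rotated 2]) (auto simp: assms(2))
qed

lemma U_val:
  fixes g :: "real \<Rightarrow> real"
  assumes m: "g \<in> borel_measurable borel" and b: "\<And>x. x \<in> {0..1} \<Longrightarrow> \<bar>g x\<bar> \<le> B"
    and hi: "(g has_integral v) {0..1}"
  shows "integrable U g" and "(\<integral>x. g x \<partial>U) = v"
  using LU[OF m b] hi integral_unique by auto

lemma meas_iI[measurable]: "(\<lambda>y. iI a y s) \<in> borel_measurable borel"
  unfolding iI_def in_perI_def by measurable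

lemma meas_len[measurable]: "(\<lambda>y. len_perI a y) \<in> borel_measurable borel"
  unfolding len_perI_def by measurable

lemma iI_bnd: "\<bar>iI a y s\<bar> \<le> 1" by (simp add: iI_def)

lemma len_bnd: "a \<in> {0..1} \<Longrightarrow> y \<in> {0..1} \<Longrightarrow> \<bar>len_perI a y\<bar> \<le> 1"
  by (auto simp: len_perI_def)

lemma inner_LL:
  assumes a: "a \<in> {0..1}"
  shows "((\<lambda>y. (len_perI a y)\<^sup>2) has_integral 1/3) {0..1}"
proof -
  have 1: "((\<lambda>y. (len_perI a y)\<^sup>2) has_integral ((\<lambda>y. (1-a+y)^3/3) a - (\<lambda>y. (1-a+y)^3/3) 0)) {0..a}"
    using a by (intro hk_piece[where f="\<lambda>y. (1-a+y)\<^sup>2"])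
      (auto simp: len_perI_def intro!: derivative_eq_intros continuous_intros simp: power2_eq_square power3_eq_cube)
  have 2: "((\<lambda>y. (len_perI a y)\<^sup>2) has_integral ((\<lambda>y. (y-a)^3/3) 1 - (\<lambda>y. (y-a)^3/3) a)) {a..1}"
    using a by (intro hk_piece[where f="\<lambda>y. (y-a)\<^sup>2"])
      (auto simp: len_perI_def intro!: derivative_eq_intros continuous_intros simp: power2_eq_square power3_eq_cube)
  have "((\<lambda>y. (len_perI a y)\<^sup>2) has_integral ((\<lambda>y. (1-a+y)^3/3) a - (\<lambda>y. (1-a+y)^3/3) 0) + ((\<lambda>y. (y-a)^3/3) 1 - (\<lambda>y. (y-a)^3/3) a)) {0..1}"
    using a by (intro has_integral_combine[OF _ _ 1 2]) auto
  moreover have "((\<lambda>y. (1-a+y)^3/3) a - (\<lambda>y. (1-a+y)^3/3) 0) + ((\<lambda>y. (y-a)^3/3) 1 - (\<lambda>y. (y-a)^3/3) a) = 1/3"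
    by (simp add: power3_eq_cube algebra_simps)
  ultimately show ?thesis by simp
qed


definition hLI :: "real \<Rightarrow> real \<Rightarrow> real" where
  "hLI s a = (if a \<le> s then (1 - (s-a)\<^sup>2)/2 else (a-s) - (a-s)\<^sup>2/2)"

definition hII0 :: "real \<Rightarrow> real \<Rightarrow> real \<Rightarrow> real" where
  "hII0 s t a = (if a \<le> s then 1 + a - t else if a \<le> t then a - s else a - t)"

definition hII :: "real \<Rightarrow> real \<Rightarrow> real \<Rightarrow> real" where
  "hII s t = hII0 (min s t) (max s t)"

lemma comb3:
  fixes g :: "real \<Rightarrow> real"
  assumes "a \<le> b" "b \<le> c" "c \<le> e"
   "(g has_integral i1) {a..b}" "(g has_integral i2) {b..c}" "(g has_integral i3) {c..e}"
  shows "(g has_integral (i1+i2+i3)) {a..e}"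
  using assms by (meson has_integral_combine order_trans)

lemma comb4:
  fixes g :: "real \<Rightarrow> real"
  assumes "a \<le> b" "b \<le> c" "c \<le> e" "e \<le> f"
   "(g has_integral i1) {a..b}" "(g has_integral i2) {b..c}" "(g has_integral i3) {c..e}" "(g has_integral i4) {e..f}"
  shows "(g has_integral (i1+i2+i3+i4)) {a..f}"
  using assms by (meson has_integral_combine order_trans)

lemma hiv: "(f has_integral i) S \<Longrightarrow> i = j \<Longrightarrow> (f has_integral j) S"
  by simp

lemma zero_piece:
  fixes g :: "real \<Rightarrow> real"
  assumes "a \<le> b" "\<And>x. a < x \<Longrightarrow> x < b \<Longrightarrow> g x = 0"
  shows "(g has_integral 0) {a..b}"
  using hk_piece[of a b g "\<lambda>_. 0" "\<lambda>_. 0"] assms by auto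

lemma inner_LI:
  assumes a: "a \<in> {0..1}" and s: "s \<in> {0..<1}"
  shows "((\<lambda>y. len_perI a y * iI a y s) has_integral hLI s a) {0..1}"
proof (cases "a \<le> s")
  case True
  have 1: "((\<lambda>y. len_perI a y * iI a y s) has_integral ((\<lambda>y. (1-a+y)^2/2) a - (\<lambda>y. (1-a+y)^2/2) 0)) {0..a}"
    using a s True by (intro hk_piece[where f="\<lambda>y. (1-a+y)"])
      (auto simp: len_perI_def iI_def in_perI_def intro!: derivative_eq_intros continuous_intros simp: power2_eq_square)
  have 2: "((\<lambda>y. len_perI a y * iI a y s) has_integral 0) {a..s}"
    using a s True by (intro zero_piece) (auto simp: len_perI_def iI_def in_perI_def)
  have 3: "((\<lambda>y. len_perI a y * iI a y s) has_integral ((\<lambda>y. (y-a)^2/2) 1 - (\<lambda>y. (y-a)^2/2) s)) {s..1}"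
    using a s True by (intro hk_piece[where f="\<lambda>y. (y-a)"])
      (auto simp: len_perI_def iI_def in_perI_def intro!: derivative_eq_intros continuous_intros simp: power2_eq_square)
  show ?thesis using a s True by (intro hiv[OF comb3[OF _ _ _ 1 2 3]]) (auto simp: hLI_def power2_eq_square field_simps)
next
  case False
  have 1: "((\<lambda>y. len_perI a y * iI a y s) has_integral 0) {0..s}"
    using a s False by (intro zero_piece) (auto simp: len_perI_def iI_def in_perI_def)
  have 2: "((\<lambda>y. len_perI a y * iI a y s) has_integral ((\<lambda>y. (1-a+y)^2/2) a - (\<lambda>y. (1-a+y)^2/2) s)) {s..a}"
    using a s False by (intro hk_piece[where f="\<lambda>y. (1-a+y)"])
      (auto simp: len_perI_def iI_def in_perI_def intro!: derivative_eq_intros continuous_intros simp: power2_eq_square)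
  have 3: "((\<lambda>y. len_perI a y * iI a y s) has_integral 0) {a..1}"
    using a s False by (intro zero_piece) (auto simp: len_perI_def iI_def in_perI_def)
  show ?thesis using a s False by (intro hiv[OF comb3[OF _ _ _ 1 2 3]]) (auto simp: hLI_def power2_eq_square field_simps)
qed

lemma inner_II0:
  assumes a: "a \<in> {0..1}" and s: "s \<in> {0..<1}" and t: "t \<in> {0..<1}" and st: "s \<le> t"
  shows "((\<lambda>y. iI a y s * iI a y t) has_integral hII0 s t a) {0..1}"
proof -
  consider "a \<le> s" | "s < a" "a \<le> t" | "t < a" by linarith
  then show ?thesis
  proof cases
    case 1
    have p1: "((\<lambda>y. iI a y s * iI a y t) has_integral ((\<lambda>y. y) a - (\<lambda>y. y) 0)) {0..a}"
      using a s t st 1 by (intro hk_piece[where f="\<lambda>y. 1"])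
        (auto simp: iI_def in_perI_def intro!: derivative_eq_intros continuous_intros)
    have p2: "((\<lambda>y. iI a y s * iI a y t) has_integral 0) {a..s}"
      using a s t st 1 by (intro zero_piece) (auto simp: iI_def in_perI_def)
    have p3: "((\<lambda>y. iI a y s * iI a y t) has_integral 0) {s..t}"
      using a s t st 1 by (intro zero_piece) (auto simp: iI_def in_perI_def)
    have p4: "((\<lambda>y. iI a y s * iI a y t) has_integral ((\<lambda>y. y) 1 - (\<lambda>y. y) t)) {t..1}"
      using a s t st 1 by (intro hk_piece[where f="\<lambda>y. 1"])
        (auto simp: iI_def in_perI_def intro!: derivative_eq_intros continuous_intros)
    show ?thesis using a s t st 1 by (intro hiv[OF comb4[OF _ _ _ _ p1 p2 p3 p4]]) (auto simp: hII0_def algebra_simps)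
  next
    case 2
    have p1: "((\<lambda>y. iI a y s * iI a y t) has_integral 0) {0..s}"
      using a s t st 2 by (intro zero_piece) (auto simp: iI_def in_perI_def)
    have p2: "((\<lambda>y. iI a y s * iI a y t) has_integral ((\<lambda>y. y) a - (\<lambda>y. y) s)) {s..a}"
      using a s t st 2 by (intro hk_piece[where f="\<lambda>y. 1"])
        (auto simp: iI_def in_perI_def intro!: derivative_eq_intros continuous_intros)
    have p3: "((\<lambda>y. iI a y s * iI a y t) has_integral 0) {a..t}"
      using a s t st 2 by (intro zero_piece) (auto simp: iI_def in_perI_def)
    have p4: "((\<lambda>y. iI a y s * iI a y t) has_integral 0) {t..1}"
      using a s t st 2 by (intro zero_piece) (auto simp: iI_def in_perI_def)
    show ?thesis using a s t st 2 by (intro hiv[OF comb4[OF _ _ _ _ p1 p2 p3 p4]]) (auto simp: hII0_def algebra_simps)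
  next
    case 3
    have p1: "((\<lambda>y. iI a y s * iI a y t) has_integral 0) {0..s}"
      using a s t st 3 by (intro zero_piece) (auto simp: iI_def in_perI_def)
    have p2: "((\<lambda>y. iI a y s * iI a y t) has_integral 0) {s..t}"
      using a s t st 3 by (intro zero_piece) (auto simp: iI_def in_perI_def)
    have p3: "((\<lambda>y. iI a y s * iI a y t) has_integral ((\<lambda>y. y) a - (\<lambda>y. y) t)) {t..a}"
      using a s t st 3 by (intro hk_piece[where f="\<lambda>y. 1"])
        (auto simp: iI_def in_perI_def intro!: derivative_eq_intros continuous_intros)
    have p4: "((\<lambda>y. iI a y s * iI a y t) has_integral 0) {a..1}"
      using a s t st 3 by (intro zero_piece) (auto simp: iI_def in_perI_def)
    show ?thesis using a s t st 3 by (intro hiv[OF comb4[OF _ _ _ _ p1 p2 p3 p4]]) (auto simp: hII0_def algebra_simps)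
  qed
qed

lemma inner_II:
  assumes a: "a \<in> {0..1}" and s: "s \<in> {0..<1}" and t: "t \<in> {0..<1}"
  shows "((\<lambda>y. iI a y s * iI a y t) has_integral hII s t a) {0..1}"
proof (cases "s \<le> t")
  case True
  then show ?thesis using inner_II0[OF a s t True] by (simp add: hII_def min_def max_def)
next
  case False
  then have "t \<le> s" by simp
  from inner_II0[OF a t s this] False show ?thesis by (simp add: hII_def min_def max_def mult.commute)
qed


definition kap :: "real \<Rightarrow> real \<Rightarrow> real" where
  "kap s t = 1/2 - \<bar>s - t\<bar> + (s - t)\<^sup>2"

lemma outer_LI:
  assumes s: "s \<in> {0..<1}"
  shows "(hLI s has_integral 1/3) {0..1}"
proof -
  have 1: "(hLI s has_integral ((\<lambda>a. a/2 + (s-a)^3/6) s - (\<lambda>a. a/2 + (s-a)^3/6) 0)) {0..s}"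
    using s by (intro hk_piece[where f="\<lambda>a. (1 - (s-a)\<^sup>2)/2"])
      (auto simp: hLI_def intro!: derivative_eq_intros continuous_intros simp: power2_eq_square power3_eq_cube field_simps)
  have 2: "(hLI s has_integral ((\<lambda>a. (a-s)^2/2 - (a-s)^3/6) 1 - (\<lambda>a. (a-s)^2/2 - (a-s)^3/6) s)) {s..1}"
    using s by (intro hk_piece[where f="\<lambda>a. (a-s) - (a-s)\<^sup>2/2"])
      (auto simp: hLI_def intro!: derivative_eq_intros continuous_intros simp: power2_eq_square power3_eq_cube field_simps)
  show ?thesis using s by (intro hiv[OF has_integral_combine[OF _ _ 1 2]]) (auto simp: power2_eq_square power3_eq_cube field_simps)
qed

lemma outer_II0:
  assumes s: "s \<in> {0..<1}" and t: "t \<in> {0..<1}" and st: "s \<le> t"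
  shows "(hII0 s t has_integral kap s t) {0..1}"
proof -
  have 1: "(hII0 s t has_integral ((\<lambda>a. a + a^2/2 - t*a) s - (\<lambda>a. a + a^2/2 - t*a) 0)) {0..s}"
    using s t st by (intro hk_piece[where f="\<lambda>a. 1 + a - t"])
      (auto simp: hII0_def intro!: derivative_eq_intros continuous_intros simp: power2_eq_square field_simps)
  have 2: "(hII0 s t has_integral ((\<lambda>a. (a-s)^2/2) t - (\<lambda>a. (a-s)^2/2) s)) {s..t}"
    using s t st by (intro hk_piece[where f="\<lambda>a. a - s"])
      (auto simp: hII0_def intro!: derivative_eq_intros continuous_intros simp: power2_eq_square field_simps)
  have 3: "(hII0 s t has_integral ((\<lambda>a. (a-t)^2/2) 1 - (\<lambda>a. (a-t)^2/2) t)) {t..1}"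
    using s t st by (intro hk_piece[where f="\<lambda>a. a - t"])
      (auto simp: hII0_def intro!: derivative_eq_intros continuous_intros simp: power2_eq_square field_simps)
  show ?thesis using s t st by (intro hiv[OF comb3[OF _ _ _ 1 2 3]]) (auto simp: kap_def power2_eq_square field_simps)
qed

lemma outer_II:
  assumes s: "s \<in> {0..<1}" and t: "t \<in> {0..<1}"
  shows "(hII s t has_integral kap s t) {0..1}"
proof (cases "s \<le> t")
  case True
  then show ?thesis using outer_II0[OF s t True] by (simp add: hII_def min_def max_def)
next
  case False
  then have "t \<le> s" by simp
  from outer_II0[OF t s this] False show ?thesis by (simp add: hII_def min_def max_def kap_def abs_minus_commute power2_commute)
qed

lemma meas_hLI[measurable]: "hLI s \<in> borel_measurable borel"
  unfolding hLI_def by measurable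
lemma meas_hII[measurable]: "hII s t \<in> borel_measurable borel"
  unfolding hII_def hII0_def by measurable

lemma U_LL: "a \<in> {0..1} \<Longrightarrow> integrable U (\<lambda>y. (len_perI a y)\<^sup>2) \<and> (\<integral>y. (len_perI a y)\<^sup>2 \<partial>U) = 1/3"
  using U_val[OF _ _ inner_LL, of a 1] len_bnd[of a]
  by (auto simp: abs_le_square_iff power_le_one abs_square_le_1)


lemma U_LI:
  assumes a: "a \<in> {0..1}" and s: "s \<in> {0..<1}"
  shows "integrable U (\<lambda>y. len_perI a y * iI a y s) \<and> (\<integral>y. len_perI a y * iI a y s \<partial>U) = hLI s a"
proof -
  have b: "\<bar>len_perI a y * iI a y s\<bar> \<le> 1" if "y \<in> {0..1}" for y
    using len_bnd[OF a that] by (auto simp: iI_def)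
  show ?thesis using U_val[OF _ b inner_LI[OF a s]] by auto
qed

lemma U_II: "a \<in> {0..1} \<Longrightarrow> s \<in> {0..<1} \<Longrightarrow> t \<in> {0..<1} \<Longrightarrow> integrable U (\<lambda>y. iI a y s * iI a y t) \<and> (\<integral>y. iI a y s * iI a y t \<partial>U) = hII s t a"
proof -
  assume a: "a \<in> {0..1}" and s: "s \<in> {0..<1}" and t: "t \<in> {0..<1}"
  have b: "\<bar>iI a y s * iI a y t\<bar> \<le> 1" for y
    by (auto simp: iI_def)
  show ?thesis using U_val[OF _ b inner_II[OF a s t]] by auto
qed

lemma hLI_bnd:
  assumes a: "a \<in> {0..1}" and s: "s \<in> {0..<1}"
  shows "\<bar>hLI s a\<bar> \<le> 1"
proof -
  have "\<bar>s - a\<bar> \<le> 1" using a s by auto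
  then have q: "(s-a)\<^sup>2 \<le> 1" by (simp add: abs_le_square_iff[where y=1, simplified])
  have q0: "0 \<le> (s-a)\<^sup>2" by simp
  have q2: "(a-s)\<^sup>2 = (s-a)\<^sup>2" by (simp add: power2_commute)
  show ?thesis unfolding hLI_def using a s q q2 apply (auto simp: abs_le_iff) using q0 by linarith+
qed

lemma hII0_bnd: "a \<in> {0..1} \<Longrightarrow> s \<in> {0..<1} \<Longrightarrow> t \<in> {0..<1} \<Longrightarrow> \<bar>hII0 s t a\<bar> \<le> 2"
  unfolding hII0_def by (simp add: abs_le_iff)

lemma hII_bnd: "a \<in> {0..1} \<Longrightarrow> s \<in> {0..<1} \<Longrightarrow> t \<in> {0..<1} \<Longrightarrow> \<bar>hII s t a\<bar> \<le> 2"
  unfolding hII_def by (rule hII0_bnd) (auto simp: min_def max_def)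

lemma U_hLI: "s \<in> {0..<1} \<Longrightarrow> integrable U (hLI s) \<and> (\<integral>y. hLI s y \<partial>U) = 1/3"
  using U_val[OF _ _ outer_LI, of s 1] hLI_bnd[of _ s] by auto

lemma U_hII: "s \<in> {0..<1} \<Longrightarrow> t \<in> {0..<1} \<Longrightarrow> integrable U (hII s t) \<and> (\<integral>y. hII s t y \<partial>U) = kap s t"
  using U_val[OF _ _ outer_II, of s t 2] hII_bnd[of _ s t] by auto

lemma U_const: "integrable U (\<lambda>y. c::real) \<and> (\<integral>y. c \<partial>U) = c"
proof -
  interpret finite_measure U by (rule fin_U)
  show ?thesis using emeasure_U by (simp add: measure_def)
qed

lemma ind_prod: "(if in_perB d x y p then c else 0) = c * (\<Prod>i<d. iI (x i) (y i) (p i))"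
proof -
  have "(\<Prod>i<d. iI (x i) (y i) (p i)) = (if (\<forall>i<d. in_perI (x i) (y i) (p i)) then 1 else 0)"
    by (induction d) (auto simp: iI_def less_Suc_eq)
  then show ?thesis by (auto simp: in_perB_def)
qed


lemma disc_sq:
  "(disc_perB d N P w x y)\<^sup>2 =
     (\<Sum>j<N. \<Sum>k<N. w j * w k * (\<Prod>i<d. iI (x i) (y i) (P j i) * iI (x i) (y i) (P k i)))
     - 2 * (\<Sum>j<N. w j * (\<Prod>i<d. len_perI (x i) (y i) * iI (x i) (y i) (P j i)))
     + (\<Prod>i<d. (len_perI (x i) (y i))\<^sup>2)"
proof -
  define a where "a j = w j * (\<Prod>i<d. iI (x i) (y i) (P j i))" for j
  define A where "A = (\<Sum>j<N. a j)"
  define V where "V = (\<Prod>i<d. len_perI (x i) (y i))"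
  have d: "disc_perB d N P w x y = A - V"
    unfolding disc_perB_def A_def a_def V_def vol_perB_def by (simp add: ind_prod)
  have "A\<^sup>2 = (\<Sum>j<N. \<Sum>k<N. a j * a k)"
    unfolding A_def power2_eq_square sum_product ..
  also have "\<dots> = (\<Sum>j<N. \<Sum>k<N. w j * w k * (\<Prod>i<d. iI (x i) (y i) (P j i) * iI (x i) (y i) (P k i)))"
    unfolding a_def prod.distrib by (intro sum.cong refl) (simp add: ac_simps)
  finally have 1: "A\<^sup>2 = \<dots>" .
  have "A * V = (\<Sum>j<N. a j * V)"
    unfolding A_def by (simp add: sum_distrib_right)
  also have "\<dots> = (\<Sum>j<N. w j * (\<Prod>i<d. len_perI (x i) (y i) * iI (x i) (y i) (P j i)))"
    unfolding a_def V_def prod.distrib by (intro sum.cong refl) (simp add: ac_simps)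
  finally have 2: "A * V = \<dots>" .
  have 3: "V\<^sup>2 = (\<Prod>i<d. (len_perI (x i) (y i))\<^sup>2)"
    unfolding V_def by (simp add: power2_eq_square prod.distrib)
  have "(A - V)\<^sup>2 = A\<^sup>2 - 2 * (A * V) + V\<^sup>2" by (simp add: power2_diff)
  then show ?thesis unfolding d 1 2 3 .
qed


definition QK :: "nat \<Rightarrow> nat \<Rightarrow> (nat \<Rightarrow> nat \<Rightarrow> real) \<Rightarrow> (nat \<Rightarrow> real) \<Rightarrow> real" where
  "QK d N P w = (\<Sum>j<N. \<Sum>k<N. w j * w k * (\<Prod>i<d. kap (P j i) (P k i)))"

lemma lin3:
  fixes f g h :: "'a \<Rightarrow> real"
  assumes "integrable M f" "integrable M g" "integrable M h"
  shows "(\<integral>y. f y - 2 * g y + h y \<partial>M) = integral\<^sup>L M f - 2 * integral\<^sup>L M g + integral\<^sup>L M h"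
    and "integrable M (\<lambda>y. f y - 2 * g y + h y)"
  using assms by (simp_all add: integral_add integral_diff)

lemma sum2_int:
  fixes F :: "nat \<Rightarrow> nat \<Rightarrow> 'a \<Rightarrow> real"
  assumes "\<And>j k. j < N \<Longrightarrow> k < N \<Longrightarrow> integrable M (F j k)"
  shows "(\<integral>y. (\<Sum>j<N. \<Sum>k<N. c j k * F j k y) \<partial>M) = (\<Sum>j<N. \<Sum>k<N. c j k * integral\<^sup>L M (F j k))"
    and "integrable M (\<lambda>y. \<Sum>j<N. \<Sum>k<N. c j k * F j k y)"
proof -
  show "integrable M (\<lambda>y. \<Sum>j<N. \<Sum>k<N. c j k * F j k y)"
    by (rule Bochner_Integration.integrable_sum, rule Bochner_Integration.integrable_sum, rule integrable_mult_right, rule assms) auto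
  have "(\<integral>y. (\<Sum>j<N. \<Sum>k<N. c j k * F j k y) \<partial>M) = (\<Sum>j<N. (\<integral>y. (\<Sum>k<N. c j k * F j k y) \<partial>M))"
    by (rule Bochner_Integration.integral_sum, rule Bochner_Integration.integrable_sum, rule integrable_mult_right, rule assms) auto
  also have "\<dots> = (\<Sum>j<N. \<Sum>k<N. c j k * integral\<^sup>L M (F j k))"
    by (intro sum.cong refl, subst Bochner_Integration.integral_sum) (auto intro!: assms)
  finally show "(\<integral>y. (\<Sum>j<N. \<Sum>k<N. c j k * F j k y) \<partial>M) = (\<Sum>j<N. \<Sum>k<N. c j k * integral\<^sup>L M (F j k))" .
qed

lemma sum1_int:
  fixes F :: "nat \<Rightarrow> 'a \<Rightarrow> real"
  assumes "\<And>j. j < N \<Longrightarrow> integrable M (F j)"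
  shows "(\<integral>y. (\<Sum>j<N. c j * F j y) \<partial>M) = (\<Sum>j<N. c j * integral\<^sup>L M (F j))"
    and "integrable M (\<lambda>y. \<Sum>j<N. c j * F j y)"
  by (subst Bochner_Integration.integral_sum) (auto intro!: assms)

lemma L2_sq_formula:
  assumes P: "point_set_in d N P"
  shows "(L2per d N P w)\<^sup>2 = QK d N P w - 2 * (\<Sum>j<N. w j) / 3^d + 1 / 3^d"
proof -
  let ?C = "unit_cube d"
  have Pin: "P j i \<in> {0..<1}" if "j < N" "i < d" for j i
    using P that unfolding point_set_in_def by auto
  have A1: "integrable ?C (\<lambda>y. \<Prod>i<d. iI (x i) (y i) (P j i) * iI (x i) (y i) (P k i))"
    and A2: "(\<integral>y. (\<Prod>i<d. iI (x i) (y i) (P j i) * iI (x i) (y i) (P k i)) \<partial>?C) = (\<Prod>i<d. hII (P j i) (P k i) (x i))"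
    and A3: "integrable ?C (\<lambda>x. \<Prod>i<d. hII (P j i) (P k i) (x i))"
    and A4: "(\<integral>x. (\<Prod>i<d. hII (P j i) (P k i) (x i)) \<partial>?C) = (\<Prod>i<d. kap (P j i) (P k i))"
    if "j < N" "k < N" "x \<in> space ?C" for j k x
  proof -
    have i1: "\<And>i a. i < d \<Longrightarrow> a \<in> {0..1} \<Longrightarrow> integrable U (\<lambda>y. iI a y (P j i) * iI a y (P k i))"
      and i2: "\<And>i a. i < d \<Longrightarrow> a \<in> {0..1} \<Longrightarrow> (\<integral>y. iI a y (P j i) * iI a y (P k i) \<partial>U) = hII (P j i) (P k i) a"
      and i3: "\<And>i. i < d \<Longrightarrow> integrable U (hII (P j i) (P k i))"
      using U_II U_hII Pin that by auto
    show "integrable ?C (\<lambda>y. \<Prod>i<d. iI (x i) (y i) (P j i) * iI (x i) (y i) (P k i))"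
      "(\<integral>y. (\<Prod>i<d. iI (x i) (y i) (P j i) * iI (x i) (y i) (P k i)) \<partial>?C) = (\<Prod>i<d. hII (P j i) (P k i) (x i))"
      "integrable ?C (\<lambda>x. \<Prod>i<d. hII (P j i) (P k i) (x i))"
      using PI(1,2)[OF i1 i2 i3 that(3)] PI(3)[OF i1 i2 i3] by auto
    have "(\<integral>x. (\<Prod>i<d. hII (P j i) (P k i) (x i)) \<partial>?C) = (\<Prod>i<d. integral\<^sup>L U (hII (P j i) (P k i)))"
      using PI(4)[OF i1 i2 i3] by auto
    also have "\<dots> = (\<Prod>i<d. kap (P j i) (P k i))"
      by (intro prod.cong refl) (use U_hII Pin that in auto)
    finally show "(\<integral>x. (\<Prod>i<d. hII (P j i) (P k i) (x i)) \<partial>?C) = (\<Prod>i<d. kap (P j i) (P k i))" .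
  qed
  have B1: "integrable ?C (\<lambda>y. \<Prod>i<d. len_perI (x i) (y i) * iI (x i) (y i) (P j i))"
    and B2: "(\<integral>y. (\<Prod>i<d. len_perI (x i) (y i) * iI (x i) (y i) (P j i)) \<partial>?C) = (\<Prod>i<d. hLI (P j i) (x i))"
    and B3: "integrable ?C (\<lambda>x. \<Prod>i<d. hLI (P j i) (x i))"
    and B4: "(\<integral>x. (\<Prod>i<d. hLI (P j i) (x i)) \<partial>?C) = 1 / 3^d"
    if "j < N" "x \<in> space ?C" for j x
  proof -
    have i1: "\<And>i a. i < d \<Longrightarrow> a \<in> {0..1} \<Longrightarrow> integrable U (\<lambda>y. len_perI a y * iI a y (P j i))"
      and i2: "\<And>i a. i < d \<Longrightarrow> a \<in> {0..1} \<Longrightarrow> (\<integral>y. len_perI a y * iI a y (P j i) \<partial>U) = hLI (P j i) a"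
      and i3: "\<And>i. i < d \<Longrightarrow> integrable U (hLI (P j i))"
      using U_LI U_hLI Pin that by auto
    show "integrable ?C (\<lambda>y. \<Prod>i<d. len_perI (x i) (y i) * iI (x i) (y i) (P j i))"
      "(\<integral>y. (\<Prod>i<d. len_perI (x i) (y i) * iI (x i) (y i) (P j i)) \<partial>?C) = (\<Prod>i<d. hLI (P j i) (x i))"
      "integrable ?C (\<lambda>x. \<Prod>i<d. hLI (P j i) (x i))"
      using PI(1,2)[OF i1 i2 i3 that(2)] PI(3)[OF i1 i2 i3] by auto
    have "(\<integral>x. (\<Prod>i<d. hLI (P j i) (x i)) \<partial>?C) = (\<Prod>i<d. integral\<^sup>L U (hLI (P j i)))"
      using PI(4)[OF i1 i2 i3] by auto
    also have "\<dots> = (\<Prod>i<d. 1/3)"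
      by (intro prod.cong refl) (use U_hLI Pin that in auto)
    finally show "(\<integral>x. (\<Prod>i<d. hLI (P j i) (x i)) \<partial>?C) = 1 / 3^d" by (simp add: power_one_over)
  qed
  have C1: "integrable ?C (\<lambda>y. \<Prod>i<d. (len_perI (x i) (y i))\<^sup>2)"
    and C2: "(\<integral>y. (\<Prod>i<d. (len_perI (x i) (y i))\<^sup>2) \<partial>?C) = (\<Prod>i<d. 1/3)"
    and C3: "integrable ?C (\<lambda>x. \<Prod>i<d. (1/3::real))"
    and C4: "(\<integral>x. (\<Prod>i<d. (1/3::real)) \<partial>?C) = 1 / 3^d"
    if "x \<in> space ?C" for x
  proof -
    have i1: "\<And>i a. i < d \<Longrightarrow> a \<in> {0..1} \<Longrightarrow> integrable U (\<lambda>y. (len_perI a y)\<^sup>2)"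
      and i2: "\<And>i a. i < d \<Longrightarrow> a \<in> {0..1} \<Longrightarrow> (\<integral>y. (len_perI a y)\<^sup>2 \<partial>U) = 1/3"
      and i3: "\<And>i. i < d \<Longrightarrow> integrable U (\<lambda>_. 1/3::real)"
      using U_LL U_const by auto
    show "integrable ?C (\<lambda>y. \<Prod>i<d. (len_perI (x i) (y i))\<^sup>2)"
      "(\<integral>y. (\<Prod>i<d. (len_perI (x i) (y i))\<^sup>2) \<partial>?C) = (\<Prod>i<d. 1/3)"
      "integrable ?C (\<lambda>x. \<Prod>i<d. (1/3::real))"
      using PI(1,2)[OF i1 i2 i3 that] PI(3)[OF i1 i2 i3] by auto
    have "(\<integral>x. (\<Prod>i<d. (1/3::real)) \<partial>?C) = (\<Prod>i<d. integral\<^sup>L U (\<lambda>_. 1/3::real))"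
      using PI(4)[OF i1 i2 i3] by auto
    also have "\<dots> = (\<Prod>i<d. 1/3)"
      by (intro prod.cong refl) (use U_const in auto)
    finally show "(\<integral>x. (\<Prod>i<d. (1/3::real)) \<partial>?C) = 1 / 3^d" by (simp add: power_one_over)
  qed
  define IN where "IN x = (\<Sum>j<N. \<Sum>k<N. w j * w k * (\<Prod>i<d. hII (P j i) (P k i) (x i)))
     - 2 * (\<Sum>j<N. w j * (\<Prod>i<d. hLI (P j i) (x i))) + (\<Prod>i<d. (1/3::real))" for x
  have inner: "(\<integral>y. (disc_perB d N P w x y)\<^sup>2 \<partial>?C) = IN x" if x: "x \<in> space ?C" for x
  proof -
    have "(\<integral>y. (disc_perB d N P w x y)\<^sup>2 \<partial>?C) =
      (\<integral>y. (\<Sum>j<N. \<Sum>k<N. w j * w k * (\<Prod>i<d. iI (x i) (y i) (P j i) * iI (x i) (y i) (P k i)))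
     - 2 * (\<Sum>j<N. w j * (\<Prod>i<d. len_perI (x i) (y i) * iI (x i) (y i) (P j i)))
     + (\<Prod>i<d. (len_perI (x i) (y i))\<^sup>2) \<partial>?C)"
      unfolding disc_sq ..
    also have "\<dots> = (\<Sum>j<N. \<Sum>k<N. w j * w k * (\<integral>y. (\<Prod>i<d. iI (x i) (y i) (P j i) * iI (x i) (y i) (P k i)) \<partial>?C))
     - 2 * (\<Sum>j<N. w j * (\<integral>y. (\<Prod>i<d. len_perI (x i) (y i) * iI (x i) (y i) (P j i)) \<partial>?C))
     + (\<integral>y. (\<Prod>i<d. (len_perI (x i) (y i))\<^sup>2) \<partial>?C)"
      using x
      by (subst lin3(1)) (auto intro!: sum2_int sum1_int A1 B1 C1 simp: sum2_int sum1_int A1 B1 C1)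
    also have "\<dots> = IN x"
      unfolding IN_def using A2 B2 C2 x by simp
    finally show ?thesis .
  qed
  have x0: "restrict (\<lambda>_. 0::real) {..<d} \<in> space ?C"
    by (auto simp: unit_cube_eq space_PiM space_U)
  have iA: "integrable ?C (\<lambda>x. \<Sum>j<N. \<Sum>k<N. w j * w k * (\<Prod>i<d. hII (P j i) (P k i) (x i)))"
    by (rule sum2_int(2)) (rule A3[OF _ _ x0])
  have iB: "integrable ?C (\<lambda>x. \<Sum>j<N. w j * (\<Prod>i<d. hLI (P j i) (x i)))"
    by (rule sum1_int(2)) (rule B3[OF _ x0])
  have iC: "integrable ?C (\<lambda>x. \<Prod>i<d. (1/3::real))"
    by (rule C3[OF x0])
  have "(\<integral>x. (\<integral>y. (disc_perB d N P w x y)\<^sup>2 \<partial>?C) \<partial>?C) = (\<integral>x. IN x \<partial>?C)"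
    by (rule Bochner_Integration.integral_cong) (auto simp: inner)
  also have "\<dots> = (\<Sum>j<N. \<Sum>k<N. w j * w k * (\<integral>x. (\<Prod>i<d. hII (P j i) (P k i) (x i)) \<partial>?C))
     - 2 * (\<Sum>j<N. w j * (\<integral>x. (\<Prod>i<d. hLI (P j i) (x i)) \<partial>?C)) + (\<integral>x. (\<Prod>i<d. (1/3::real)) \<partial>?C)"
    unfolding IN_def lin3(1)[OF iA iB iC]
    by (subst sum2_int(1)[where c="\<lambda>j k. w j * w k", OF A3[OF _ _ x0]], assumption+,
        subst sum1_int(1)[where c=w, OF B3[OF _ x0]], assumption) (rule refl)
  also have "\<dots> = QK d N P w - 2 * (\<Sum>j<N. w j) / 3^d + 1 / 3^d"
  proof -
    have sd: "(\<Sum>j<N. w j / 3^d) = sum w {..<N} / (3::real)^d" by (simp add: sum_divide_distrib)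
    show ?thesis unfolding QK_def using A4[OF _ _ x0] B4[OF _ x0] C4[OF x0] by (simp add: sd)
  qed
  finally have I: "(\<integral>x. (\<integral>y. (disc_perB d N P w x y)\<^sup>2 \<partial>?C) \<partial>?C) = QK d N P w - 2 * (\<Sum>j<N. w j) / 3^d + 1 / 3^d" .
  have nn: "0 \<le> (\<integral>x. (\<integral>y. (disc_perB d N P w x y)\<^sup>2 \<partial>?C) \<partial>?C)"
    by (intro Bochner_Integration.integral_nonneg) auto
  show ?thesis unfolding L2per_def using nn I by simp
qed


definition psd :: "nat \<Rightarrow> (nat \<Rightarrow> nat \<Rightarrow> real) \<Rightarrow> bool" where
  "psd n G \<longleftrightarrow> (\<forall>j<n. \<forall>k<n. G j k = G k j) \<and> (\<forall>x. 0 \<le> (\<Sum>j<n. \<Sum>k<n. x j * x k * G j k))"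

lemma psdI: "(\<And>j k. j < n \<Longrightarrow> k < n \<Longrightarrow> G j k = G k j) \<Longrightarrow> (\<And>x. 0 \<le> (\<Sum>j<n. \<Sum>k<n. x j * x k * G j k)) \<Longrightarrow> psd n G"
  unfolding psd_def by auto

lemma psd_sym: "psd n G \<Longrightarrow> j < n \<Longrightarrow> k < n \<Longrightarrow> G j k = G k j"
  unfolding psd_def by auto

lemma psd_form: "psd n G \<Longrightarrow> 0 \<le> (\<Sum>j<n. \<Sum>k<n. x j * x k * G j k)"
  unfolding psd_def by auto

lemma quad_split:
  fixes G :: "nat \<Rightarrow> nat \<Rightarrow> real"
  assumes sym: "\<And>j. j < n \<Longrightarrow> G j n = G n j"
  shows "(\<Sum>j<Suc n. \<Sum>k<Suc n. x j * x k * G j k) =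
    (\<Sum>j<n. \<Sum>k<n. x j * x k * G j k) + 2 * x n * (\<Sum>j<n. x j * G j n) + (x n)\<^sup>2 * G n n"
proof -
  have "(\<Sum>j<Suc n. \<Sum>k<Suc n. x j * x k * G j k) =
     (\<Sum>j<n. \<Sum>k<n. x j * x k * G j k) + (\<Sum>j<n. x j * x n * G j n) + (\<Sum>k<n. x n * x k * G n k) + x n * x n * G n n"
    by (simp add: sum.distrib algebra_simps)
  also have "(\<Sum>k<n. x n * x k * G n k) = (\<Sum>j<n. x j * x n * G j n)"
    by (intro sum.cong refl) (simp add: sym)
  finally show ?thesis
    by (simp add: power2_eq_square sum_distrib_left algebra_simps)
qed

lemma psd_diag_zero:
  fixes G :: "nat \<Rightarrow> nat \<Rightarrow> real"
  assumes p: "psd n G" and j: "j < n" and k: "k < n" and z: "G k k = 0"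
  shows "G j k = 0"
proof (cases "j = k")
  case True then show ?thesis using z by simp
next
  case False
  define b where "b = G j k"
  define a where "a = G j j"
  have sym: "G k j = b" using psd_sym[OF p k j] b_def by simp
  have quad: "0 \<le> t\<^sup>2 * a + 2 * t * b" for t
  proof -
    define x where "x = (\<lambda>i. if i = j then t else if i = k then 1 else 0::real)"
    have "0 \<le> (\<Sum>i<n. \<Sum>l<n. x i * x l * G i l)" by (rule psd_form[OF p])
    also have "(\<Sum>i<n. \<Sum>l<n. x i * x l * G i l) = (\<Sum>i<n. \<Sum>l\<in>{j,k}. x i * x l * G i l)"
      by (intro sum.cong refl sum.mono_neutral_right) (auto simp: x_def j k)
    also have "\<dots> = (\<Sum>i\<in>{j,k}. \<Sum>l\<in>{j,k}. x i * x l * G i l)"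
      by (intro sum.mono_neutral_right) (auto simp: x_def j k)
    also have "\<dots> = t\<^sup>2 * a + 2 * t * b"
      using False z sym by (simp add: x_def a_def b_def power2_eq_square algebra_simps)
    finally show ?thesis .
  qed
  have a0: "0 \<le> a" using quad[of 1] quad[of "-1"] by simp
  show ?thesis
  proof (rule ccontr)
    assume "G j k \<noteq> 0"
    then have bne: "b \<noteq> 0" by (simp add: b_def)
    define t where "t = - b / (a + 1)"
    have ne: "a + 1 \<noteq> 0" using a0 by linarith
    have t1: "(a + 1) * t = - b" using ne by (simp add: t_def)
    have "(a + 1)\<^sup>2 * (t\<^sup>2 * a + 2 * t * b) = a * ((a + 1) * t)\<^sup>2 + 2 * b * (a + 1) * ((a + 1) * t)"
      by (simp add: power2_eq_square algebra_simps)
    also have "\<dots> = - (b\<^sup>2 * (a + 2))" unfolding t1 by (simp add: power2_eq_square algebra_simps)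
    finally have e: "(a + 1)\<^sup>2 * (t\<^sup>2 * a + 2 * t * b) = - (b\<^sup>2 * (a + 2))" .
    have "- (b\<^sup>2 * (a + 2)) < 0" using a0 bne by (simp add: add_nonneg_pos)
    with e have "(a + 1)\<^sup>2 * (t\<^sup>2 * a + 2 * t * b) < 0" by simp
    then have "t\<^sup>2 * a + 2 * t * b < 0" using a0
      by (metis mult_nonneg_nonneg not_less zero_le_power2)
    then show False using quad[of t] by simp
  qed
qed


lemma psd_diag_nonneg:
  assumes p: "psd n G" and j: "j < n"
  shows "0 \<le> G j j"
proof -
  define x where "x = (\<lambda>i. if i = j then 1 else 0::real)"
  have "0 \<le> (\<Sum>i<n. \<Sum>l<n. x i * x l * G i l)" by (rule psd_form[OF p])
  also have "\<dots> = (\<Sum>i<n. \<Sum>l\<in>{j}. x i * x l * G i l)"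
    by (intro sum.cong refl sum.mono_neutral_right) (auto simp: x_def j)
  also have "\<dots> = (\<Sum>i\<in>{j}. \<Sum>l\<in>{j}. x i * x l * G i l)"
    by (intro sum.mono_neutral_right) (auto simp: x_def j)
  also have "\<dots> = G j j" by (simp add: x_def)
  finally show ?thesis .
qed

lemma chol:
  assumes "psd n G"
  shows "\<exists>c. \<forall>j<n. \<forall>k<n. G j k = (\<Sum>l<n. c j l * c k l)"
  using assms
proof (induction n arbitrary: G)
  case 0
  then show ?case by simp
next
  case (Suc n)
  note p = Suc.prems
  define g where "g = G n n"
  have g0: "0 \<le> g" unfolding g_def by (rule psd_diag_nonneg[OF p]) simp
  have symn: "G j n = G n j" if "j < n" for j using psd_sym[OF p] that by simp
  have zero: "G j n = 0" if "g = 0" "j < n" for j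
    using psd_diag_zero[OF p, of j n] that g_def by simp
  define G' where "G' j k = G j k - G j n * G k n / g" for j k
  have "psd n G'"
  proof (rule psdI)
    fix j k assume "j < n" "k < n"
    then show "G' j k = G' k j" unfolding G'_def using psd_sym[OF p, of j k] by simp
  next
    fix x :: "nat \<Rightarrow> real"
    define T where "T = (\<Sum>j<n. x j * G j n)"
    define x' where "x' i = (if i < n then x i else - T / g)" for i
    have T0: "g = 0 \<Longrightarrow> T = 0" unfolding T_def using zero by simp
    have "0 \<le> (\<Sum>j<Suc n. \<Sum>k<Suc n. x' j * x' k * G j k)" by (rule psd_form[OF p])
    also have "\<dots> = (\<Sum>j<n. \<Sum>k<n. x' j * x' k * G j k) + 2 * x' n * (\<Sum>j<n. x' j * G j n) + (x' n)\<^sup>2 * G n n"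
      by (rule quad_split) (rule symn)
    also have "\<dots> = (\<Sum>j<n. \<Sum>k<n. x j * x k * G j k) - T\<^sup>2 / g"
    proof (cases "g = 0")
      case True
      then show ?thesis using T0 by (simp add: x'_def T_def g_def)
    next
      case False
      have "(\<Sum>j<n. x' j * G j n) = T" by (simp add: x'_def T_def)
      then show ?thesis using False g0
        by (simp add: x'_def g_def[symmetric] power2_eq_square field_simps)
    qed
    also have "T\<^sup>2 / g = (\<Sum>j<n. \<Sum>k<n. x j * x k * (G j n * G k n / g))"
      unfolding T_def power2_eq_square sum_product sum_divide_distrib
      by (intro sum.cong refl) (simp add: algebra_simps)
    finally show "0 \<le> (\<Sum>j<n. \<Sum>k<n. x j * x k * G' j k)"
      unfolding G'_def by (simp add: right_diff_distrib sum_subtractf)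
  qed
  from Suc.IH[OF this] obtain c' where c': "\<And>j k. j < n \<Longrightarrow> k < n \<Longrightarrow> G' j k = (\<Sum>l<n. c' j l * c' k l)"
    by blast
  define c where "c j l = (if l < n then (if j < n then c' j l else 0) else (if j < n then G j n / sqrt g else sqrt g))" for j l
  have "G j k = (\<Sum>l<Suc n. c j l * c k l)" if j: "j < Suc n" and k: "k < Suc n" for j k
  proof -
    have split: "(\<Sum>l<Suc n. c j l * c k l) = (\<Sum>l<n. c j l * c k l) + c j n * c k n" by simp
    consider "j < n" "k < n" | "j < n" "k = n" | "j = n" "k < n" | "j = n" "k = n"
      using j k by linarith
    then show ?thesis
    proof cases
      case 1
      have "(\<Sum>l<n. c j l * c k l) = G' j k" using 1 c' by (simp add: c_def)
      moreover have "c j n * c k n = G j n * G k n / g"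
        using 1 g0 by (cases "g = 0") (auto simp: c_def real_sqrt_mult[symmetric])
      ultimately show ?thesis unfolding split G'_def by simp
    next
      case 2
      have "(\<Sum>l<n. c j l * c k l) = 0" using 2 by (simp add: c_def)
      moreover have "c j n * c k n = G j n"
        using 2 g0 zero by (cases "g = 0") (auto simp: c_def)
      ultimately show ?thesis unfolding split using 2 by simp
    next
      case 3
      have "(\<Sum>l<n. c j l * c k l) = 0" using 3 by (simp add: c_def)
      moreover have "c j n * c k n = G k n"
        using 3 g0 zero by (cases "g = 0") (auto simp: c_def)
      ultimately show ?thesis unfolding split using 3 symn[of k] by simp
    next
      case 4
      then show ?thesis using g0 by (simp add: c_def g_def)
    qed
  qed
  then show ?case by blast
qed


lemma psd_schur:
  assumes A: "psd n A" and B: "psd n B"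
  shows "psd n (\<lambda>j k. A j k * B j k)"
proof (rule psdI)
  fix j k assume "j < n" "k < n"
  then show "A j k * B j k = A k j * B k j" using psd_sym[OF A] psd_sym[OF B] by simp
next
  fix x :: "nat \<Rightarrow> real"
  obtain c where c: "\<And>j k. j < n \<Longrightarrow> k < n \<Longrightarrow> B j k = (\<Sum>l<n. c j l * c k l)"
    using chol[OF B] by blast
  have e: "x j * x k * (A j k * B j k) = (\<Sum>l<n. (x j * c j l) * (x k * c k l) * A j k)"
    if "j < n" "k < n" for j k
  proof -
    have "x j * x k * (A j k * B j k) = (x j * x k * A j k) * (\<Sum>l<n. c j l * c k l)"
      using c that by simp
    also have "\<dots> = (\<Sum>l<n. (x j * x k * A j k) * (c j l * c k l))" by (rule sum_distrib_left)
    also have "\<dots> = (\<Sum>l<n. (x j * c j l) * (x k * c k l) * A j k)"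
      by (intro sum.cong refl) (simp only: mult_ac)
    finally show ?thesis .
  qed
  have "(\<Sum>j<n. \<Sum>k<n. x j * x k * (A j k * B j k)) = (\<Sum>j<n. \<Sum>k<n. \<Sum>l<n. (x j * c j l) * (x k * c k l) * A j k)"
    by (intro sum.cong refl) (simp add: e)
  also have "\<dots> = (\<Sum>l<n. \<Sum>j<n. \<Sum>k<n. (x j * c j l) * (x k * c k l) * A j k)"
    by (subst sum.swap, rule sum.cong[OF refl], rule sum.swap)
  also have "\<dots> \<ge> 0"
    by (rule sum_nonneg) (rule psd_form[OF A])
  finally show "0 \<le> (\<Sum>j<n. \<Sum>k<n. x j * x k * (A j k * B j k))" .
qed

lemma psd_add: "psd n A \<Longrightarrow> psd n B \<Longrightarrow> psd n (\<lambda>j k. A j k + B j k)"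
  unfolding psd_def by (auto simp: algebra_simps sum.distrib intro!: add_nonneg_nonneg)

lemma psd_scale: "psd n A \<Longrightarrow> 0 \<le> a \<Longrightarrow> psd n (\<lambda>j k. a * A j k)"
proof -
  assume A: "psd n A" and a: "0 \<le> a"
  show ?thesis
  proof (rule psdI)
    fix j k assume "j < n" "k < n" then show "a * A j k = a * A k j" using psd_sym[OF A] by simp
  next
    fix x
    have "(\<Sum>j<n. \<Sum>k<n. x j * x k * (a * A j k)) = a * (\<Sum>j<n. \<Sum>k<n. x j * x k * A j k)"
      by (simp add: sum_distrib_left algebra_simps)
    then show "0 \<le> (\<Sum>j<n. \<Sum>k<n. x j * x k * (a * A j k))" using psd_form[OF A] a by simp
  qed
qed

lemma psd_const: "0 \<le> a \<Longrightarrow> psd n (\<lambda>j k. a)"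
proof (rule psdI)
  fix x assume a: "0 \<le> a"
  have "(\<Sum>j<n. \<Sum>k<n. x j * x k * a) = a * (\<Sum>j<n. x j)\<^sup>2"
    by (simp add: power2_eq_square sum_product sum_distrib_left algebra_simps)
  then show "0 \<le> (\<Sum>j<n. \<Sum>k<n. x j * x k * a)" using a by simp
qed simp

lemma psd_prod:
  fixes d :: nat
  assumes "\<And>i. i < d \<Longrightarrow> psd n (A i)"
  shows "psd n (\<lambda>j k. \<Prod>i<d. A i j k)"
  using assms
proof (induction d)
  case 0 then show ?case using psd_const[of 1 n] by simp
next
  case (Suc d)
  have "psd n (\<lambda>j k. (\<Prod>i<d. A i j k) * A d j k)"
    by (rule psd_schur) (use Suc in auto)
  then show ?case by simp
qed

lemma psd_prod_mono:
  fixes d :: nat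
  assumes B: "\<And>i. i < d \<Longrightarrow> psd n (B i)" and AB: "\<And>i. i < d \<Longrightarrow> psd n (\<lambda>j k. A i j k - B i j k)"
  shows "psd n (\<lambda>j k. (\<Prod>i<d. A i j k) - (\<Prod>i<d. B i j k))"
  using B AB
proof (induction d)
  case 0 then show ?case using psd_const[of 0 n] by simp
next
  case (Suc d)
  have IH: "psd n (\<lambda>j k. (\<Prod>i<d. A i j k) - (\<Prod>i<d. B i j k))" using Suc by auto
  have Ad: "psd n (A d)"
  proof -
    have "psd n (\<lambda>j k. (A d j k - B d j k) + B d j k)" by (rule psd_add) (use Suc in auto)
    then show ?thesis by simp
  qed
  have PB: "psd n (\<lambda>j k. \<Prod>i<d. B i j k)" by (rule psd_prod) (use Suc in auto)
  have "psd n (\<lambda>j k. ((\<Prod>i<d. A i j k) - (\<Prod>i<d. B i j k)) * A d j k + (\<Prod>i<d. B i j k) * (A d j k - B d j k))"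
    by (intro psd_add psd_schur IH Ad PB) (use Suc in auto)
  then show ?case by (simp add: algebra_simps)
qed

lemma cs_sum: "(\<Sum>l<n. a l)\<^sup>2 \<le> real n * (\<Sum>l<n. (a l)\<^sup>2)"
  using Cauchy_Schwarz_ineq_sum[of a "\<lambda>_. 1" "{..<n}"] by (simp add: mult.commute)


lemma vybiral:
  assumes M: "psd n M"
  shows "(\<Sum>j<n. x j * M j j)\<^sup>2 \<le> real n * (\<Sum>j<n. \<Sum>k<n. x j * x k * (M j k)\<^sup>2)"
proof -
  obtain c where c: "\<And>j k. j < n \<Longrightarrow> k < n \<Longrightarrow> M j k = (\<Sum>l<n. c j l * c k l)"
    using chol[OF M] by blast
  define F where "F j l l' = x j * c j l * c j l'" for j l l'
  have e: "x j * x k * (M j k)\<^sup>2 = (\<Sum>l<n. \<Sum>l'<n. F j l l' * F k l l')" if "j < n" "k < n" for j k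
  proof -
    have "x j * x k * (M j k)\<^sup>2 = x j * x k * ((\<Sum>l<n. c j l * c k l) * (\<Sum>l'<n. c j l' * c k l'))"
      using c that by (simp add: power2_eq_square)
    also have "\<dots> = x j * x k * (\<Sum>l<n. \<Sum>l'<n. (c j l * c k l) * (c j l' * c k l'))"
      by (simp only: sum_product)
    also have "\<dots> = (\<Sum>l<n. \<Sum>l'<n. x j * x k * ((c j l * c k l) * (c j l' * c k l')))"
      by (simp only: sum_distrib_left)
    also have "\<dots> = (\<Sum>l<n. \<Sum>l'<n. F j l l' * F k l l')"
      unfolding F_def by (intro sum.cong refl) (simp only: mult_ac)
    finally show ?thesis .
  qed
  have "(\<Sum>j<n. \<Sum>k<n. x j * x k * (M j k)\<^sup>2) = (\<Sum>j<n. \<Sum>k<n. \<Sum>l<n. \<Sum>l'<n. F j l l' * F k l l')"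
    by (intro sum.cong refl) (simp add: e)
  also have "\<dots> = (\<Sum>j<n. \<Sum>l<n. \<Sum>k<n. \<Sum>l'<n. F j l l' * F k l l')"
    by (rule sum.cong[OF refl], rule sum.swap)
  also have "\<dots> = (\<Sum>l<n. \<Sum>j<n. \<Sum>k<n. \<Sum>l'<n. F j l l' * F k l l')"
    by (rule sum.swap)
  also have "\<dots> = (\<Sum>l<n. \<Sum>j<n. \<Sum>l'<n. \<Sum>k<n. F j l l' * F k l l')"
    by (rule sum.cong[OF refl], rule sum.cong[OF refl], rule sum.swap)
  also have "\<dots> = (\<Sum>l<n. \<Sum>l'<n. \<Sum>j<n. \<Sum>k<n. F j l l' * F k l l')"
    by (rule sum.cong[OF refl], rule sum.swap)
  also have "\<dots> = (\<Sum>l<n. \<Sum>l'<n. (\<Sum>j<n. F j l l')\<^sup>2)"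
    by (simp only: power2_eq_square sum_product)
  finally have E: "(\<Sum>j<n. \<Sum>k<n. x j * x k * (M j k)\<^sup>2) = (\<Sum>l<n. \<Sum>l'<n. (\<Sum>j<n. F j l l')\<^sup>2)" .
  have 1: "(\<Sum>l<n. (\<Sum>j<n. F j l l)\<^sup>2) \<le> (\<Sum>l<n. \<Sum>l'<n. (\<Sum>j<n. F j l l')\<^sup>2)"
    by (rule sum_mono, rule member_le_sum) auto
  have "(\<Sum>j<n. x j * M j j) = (\<Sum>j<n. \<Sum>l<n. F j l l)"
    by (intro sum.cong refl) (simp add: c F_def sum_distrib_left mult_ac)
  also have "\<dots> = (\<Sum>l<n. \<Sum>j<n. F j l l)" by (rule sum.swap)
  finally have 2: "(\<Sum>j<n. x j * M j j) = (\<Sum>l<n. \<Sum>j<n. F j l l)" .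
  have "(\<Sum>j<n. x j * M j j)\<^sup>2 \<le> real n * (\<Sum>l<n. (\<Sum>j<n. F j l l)\<^sup>2)"
    unfolding 2 by (rule cs_sum)
  also have "\<dots> \<le> real n * (\<Sum>j<n. \<Sum>k<n. x j * x k * (M j k)\<^sup>2)"
    unfolding E using 1 by (intro mult_left_mono) auto
  finally show ?thesis .
qed


definition b2 :: "real \<Rightarrow> real \<Rightarrow> real" where
  "b2 s x = (x-s)\<^sup>2 - (x-s) + 1/6 + (if x \<le> s then 2*(x-s) else 0)"

definition Gk :: "real \<Rightarrow> real \<Rightarrow> real" where "Gk s t = kap s t - 1/3"
definition Hv :: "real \<Rightarrow> real \<Rightarrow> real" where "Hv s t = 1/180 + Gk s t / 3 - (Gk s t)\<^sup>2"

definition p5 :: "real \<Rightarrow> real \<Rightarrow> real \<Rightarrow> real \<Rightarrow> real \<Rightarrow> real \<Rightarrow> real" where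
  "p5 c1 c2 c3 c4 c5 x = c1*x + c2*x^2 + c3*x^3 + c4*x^4 + c5*x^5"

lemma p5_deriv: "(p5 c1 c2 c3 c4 c5 has_real_derivative (c1 + 2*c2*x + 3*c3*x^2 + 4*c4*x^3 + 5*c5*x^4)) (at x)"
  unfolding p5_def[abs_def]
  by (auto intro!: derivative_eq_intros simp: eval_nat_numeral)

lemma p5_piece:
  fixes g :: "real \<Rightarrow> real"
  assumes "a \<le> b" "\<And>x. a < x \<Longrightarrow> x < b \<Longrightarrow> g x = c1 + 2*c2*x + 3*c3*x^2 + 4*c4*x^3 + 5*c5*x^4"
  shows "(g has_integral (p5 c1 c2 c3 c4 c5 b - p5 c1 c2 c3 c4 c5 a)) {a..b}"
  by (rule hk_piece[OF assms(1,2) p5_deriv]) (auto intro!: continuous_intros)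

lemma b2_int0:
  assumes s: "s \<in> {0..<1}" and t: "t \<in> {0..<1}" and st: "s \<le> t"
  shows "((\<lambda>x. b2 s x * b2 t x) has_integral Hv s t / 6) {0..1}"
proof -
  have 1: "((\<lambda>x. b2 s x * b2 t x) has_integral (p5 (((1/36) - (1/6) * t + (1/6) * t^2 - (1/6) * s + s * t - s * t^2 + (1/6) * s^2 - s^2 * t + s^2 * t^2)) (((1/6) - (2/3) * t + (1/2) * t^2 - (2/3) * s + 2 * s * t - s * t^2 + (1/2) * s^2 - s^2 * t)) (((4/9) - t + (1/3) * t^2 - s + (4/3) * s * t + (1/3) * s^2)) (((1/2) - (1/2) * t - (1/2) * s)) (((1/5))) s - p5 (((1/36) - (1/6) * t + (1/6) * t^2 - (1/6) * s + s * t - s * t^2 + (1/6) * s^2 - s^2 * t + s^2 * t^2)) (((1/6) - (2/3) * t + (1/2) * t^2 - (2/3) * s + 2 * s * t - s * t^2 + (1/2) * s^2 - s^2 * t)) (((4/9) - t + (1/3) * t^2 - s + (4/3) * s * t + (1/3) * s^2)) (((1/2) - (1/2) * t - (1/2) * s)) (((1/5))) 0)) {0..s}"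
    using s t st by (intro p5_piece) (auto simp: b2_def algebra_simps field_simps power2_eq_square eval_nat_numeral)
  have 2: "((\<lambda>x. b2 s x * b2 t x) has_integral (p5 (((1/36) - (1/6) * t + (1/6) * t^2 + (1/6) * s - s * t + s * t^2 + (1/6) * s^2 - s^2 * t + s^2 * t^2)) (((1/3) * t - (1/2) * t^2 + (1/3) * s - s * t^2 + (1/2) * s^2 - s^2 * t)) ((- (2/9) + (1/3) * t + (1/3) * t^2 - (1/3) * s + (4/3) * s * t + (1/3) * s^2)) ((- (1/2) * t - (1/2) * s)) (((1/5))) t - p5 (((1/36) - (1/6) * t + (1/6) * t^2 + (1/6) * s - s * t + s * t^2 + (1/6) * s^2 - s^2 * t + s^2 * t^2)) (((1/3) * t - (1/2) * t^2 + (1/3) * s - s * t^2 + (1/2) * s^2 - s^2 * t)) ((- (2/9) + (1/3) * t + (1/3) * t^2 - (1/3) * s + (4/3) * s * t + (1/3) * s^2)) ((- (1/2) * t - (1/2) * s)) (((1/5))) s)) {s..t}"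
    using s t st by (intro p5_piece) (auto simp: b2_def algebra_simps field_simps power2_eq_square eval_nat_numeral)
  have 3: "((\<lambda>x. b2 s x * b2 t x) has_integral (p5 (((1/36) + (1/6) * t + (1/6) * t^2 + (1/6) * s + s * t + s * t^2 + (1/6) * s^2 + s^2 * t + s^2 * t^2)) ((- (1/6) - (2/3) * t - (1/2) * t^2 - (2/3) * s - 2 * s * t - s * t^2 - (1/2) * s^2 - s^2 * t)) (((4/9) + t + (1/3) * t^2 + s + (4/3) * s * t + (1/3) * s^2)) ((- (1/2) - (1/2) * t - (1/2) * s)) (((1/5))) 1 - p5 (((1/36) + (1/6) * t + (1/6) * t^2 + (1/6) * s + s * t + s * t^2 + (1/6) * s^2 + s^2 * t + s^2 * t^2)) ((- (1/6) - (2/3) * t - (1/2) * t^2 - (2/3) * s - 2 * s * t - s * t^2 - (1/2) * s^2 - s^2 * t)) (((4/9) + t + (1/3) * t^2 + s + (4/3) * s * t + (1/3) * s^2)) ((- (1/2) - (1/2) * t - (1/2) * s)) (((1/5))) t)) {t..1}"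
    using s t st by (intro p5_piece) (auto simp: b2_def algebra_simps field_simps power2_eq_square eval_nat_numeral)
  show ?thesis using s t st
    by (intro hiv[OF comb3[OF _ _ _ 1 2 3]]) (auto simp: p5_def Hv_def Gk_def kap_def algebra_simps field_simps power2_eq_square eval_nat_numeral)
qed


lemma kap_sym: "kap s t = kap t s"
  unfolding kap_def by (simp add: abs_minus_commute power2_commute)

lemma Hv_sym: "Hv s t = Hv t s"
  unfolding Hv_def Gk_def by (simp add: kap_sym)

lemma b2_int:
  assumes s: "s \<in> {0..<1}" and t: "t \<in> {0..<1}"
  shows "((\<lambda>x. b2 s x * b2 t x) has_integral Hv s t / 6) {0..1}"
proof (cases "s \<le> t")
  case True then show ?thesis using b2_int0[OF s t] by simp
next
  case False
  then have "t \<le> s" by simp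
  from b2_int0[OF t s this] show ?thesis by (simp add: Hv_sym mult.commute)
qed

lemma meas_b2[measurable]: "b2 s \<in> borel_measurable borel"
  unfolding b2_def by measurable

lemma b2_bnd: assumes "s \<in> {0..<1}" "x \<in> {0..1}" shows "\<bar>b2 s x\<bar> \<le> 5"
proof -
  have a: "\<bar>x - s\<bar> \<le> 1" using assms by auto
  then have q: "(x-s)\<^sup>2 \<le> 1" by (simp add: abs_le_square_iff[where y=1, simplified])
  have q0: "0 \<le> (x-s)\<^sup>2" by simp
  show ?thesis using a q unfolding b2_def apply (auto simp: abs_le_iff) using q0 by linarith+
qed

lemma U_b2:
  assumes s: "s \<in> {0..<1}" and t: "t \<in> {0..<1}"
  shows "integrable U (\<lambda>x. b2 s x * b2 t x) \<and> (\<integral>x. b2 s x * b2 t x \<partial>U) = Hv s t / 6"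
proof -
  have b: "\<bar>b2 s x * b2 t x\<bar> \<le> 25" if "x \<in> {0..1}" for x
  proof -
    have "\<bar>b2 s x * b2 t x\<bar> = \<bar>b2 s x\<bar> * \<bar>b2 t x\<bar>" by (simp add: abs_mult)
    also have "\<dots> \<le> 5 * 5" using b2_bnd[OF s that] b2_bnd[OF t that] by (intro mult_mono) auto
    finally show ?thesis by simp
  qed
  show ?thesis using U_val[OF _ b b2_int[OF s t]] by auto
qed

lemma psd_Hv:
  assumes s: "\<And>j. j < n \<Longrightarrow> s j \<in> {0..<1}"
  shows "psd n (\<lambda>j k. Hv (s j) (s k))"
proof (rule psdI)
  fix j k show "Hv (s j) (s k) = Hv (s k) (s j)" by (rule Hv_sym)
next
  fix x :: "nat \<Rightarrow> real"
  have I: "\<And>j k. j < n \<Longrightarrow> k < n \<Longrightarrow> integrable U (\<lambda>y. b2 (s j) y * b2 (s k) y)"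
    using U_b2 s by auto
  have "(\<Sum>j<n. \<Sum>k<n. x j * x k * Hv (s j) (s k)) = 6 * (\<Sum>j<n. \<Sum>k<n. x j * x k * (\<integral>y. b2 (s j) y * b2 (s k) y \<partial>U))"
  proof -
    have "(\<Sum>j<n. \<Sum>k<n. x j * x k * Hv (s j) (s k)) = (\<Sum>j<n. \<Sum>k<n. 6 * (x j * x k * (\<integral>y. b2 (s j) y * b2 (s k) y \<partial>U)))"
    proof (intro sum.cong refl)
      fix j k assume "j \<in> {..<n}" "k \<in> {..<n}"
      then have "(\<integral>y. b2 (s j) y * b2 (s k) y \<partial>U) = Hv (s j) (s k) / 6" using U_b2 s by auto
      then show "x j * x k * Hv (s j) (s k) = 6 * (x j * x k * (\<integral>y. b2 (s j) y * b2 (s k) y \<partial>U))" by simp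
    qed
    then show ?thesis by (simp add: sum_distrib_left)
  qed
  also have "\<dots> = 6 * (\<integral>y. (\<Sum>j<n. \<Sum>k<n. x j * x k * (b2 (s j) y * b2 (s k) y)) \<partial>U)"
    by (subst sum2_int(1)[where c="\<lambda>j k. x j * x k", OF I]) auto
  also have "\<dots> = 6 * (\<integral>y. (\<Sum>j<n. x j * b2 (s j) y)\<^sup>2 \<partial>U)"
    by (simp add: power2_eq_square sum_product mult_ac)
  also have "\<dots> \<ge> 0"
    by (simp add: Bochner_Integration.integral_nonneg)
  finally show "0 \<le> (\<Sum>j<n. \<Sum>k<n. x j * x k * Hv (s j) (s k))" .
qed

lemma quad_lower:
  fixes Q S :: real
  assumes h: "\<And>l. 0 \<le> l\<^sup>2 * Q - 2 * (l * S) / 3 + 1 / 3"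
  shows "S\<^sup>2 / 3 \<le> Q"
proof (cases "S = 0")
  case False
  have "0 \<le> (1/S)\<^sup>2 * Q - 2 * ((1/S) * S) / 3 + 1 / 3" by (rule h)
  then have "0 \<le> Q / S\<^sup>2 - 1/3" using False by (simp add: power2_eq_square field_simps)
  then show ?thesis using False by (simp add: field_simps)
next
  case True
  show ?thesis
  proof (rule ccontr)
    assume "\<not> ?thesis"
    then have Q: "Q < 0" using True by simp
    have "0 \<le> (sqrt (-1/Q))\<^sup>2 * Q - 2 * (sqrt (-1/Q) * S) / 3 + 1 / 3" by (rule h)
    also have "(sqrt (-1/Q))\<^sup>2 = -1/Q" using Q by simp
    finally show False using Q True by simp
  qed
qed

lemma psd_G:
  assumes s: "\<And>j. j < n \<Longrightarrow> s j \<in> {0..<1}"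
  shows "psd n (\<lambda>j k. kap (s j) (s k) - 1/3)"
proof (rule psdI)
  fix j k show "kap (s j) (s k) - 1/3 = kap (s k) (s j) - 1/3" by (simp add: kap_sym)
next
  fix x :: "nat \<Rightarrow> real"
  define P where "P j i = s j" for j i :: nat
  have Pin: "point_set_in 1 n P" unfolding point_set_in_def P_def using s by auto
  define Q where "Q = (\<Sum>j<n. \<Sum>k<n. x j * x k * kap (s j) (s k))"
  define S where "S = (\<Sum>j<n. x j)"
  have h: "0 \<le> l\<^sup>2 * Q - 2 * (l * S) / 3 + 1 / 3" for l
  proof -
    have "0 \<le> (L2per 1 n P (\<lambda>j. l * x j))\<^sup>2" by simp
    also have "\<dots> = QK 1 n P (\<lambda>j. l * x j) - 2 * (\<Sum>j<n. l * x j) / 3^1 + 1 / 3^1"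
      by (rule L2_sq_formula[OF Pin])
    also have "QK 1 n P (\<lambda>j. l * x j) = l\<^sup>2 * Q"
      unfolding QK_def Q_def P_def by (simp add: sum_distrib_left power2_eq_square mult_ac)
    also have "(\<Sum>j<n. l * x j) = l * S" unfolding S_def by (simp add: sum_distrib_left)
    finally show ?thesis by simp
  qed
  have "S\<^sup>2 / 3 \<le> Q" by (rule quad_lower[OF h])
  moreover have "(\<Sum>j<n. \<Sum>k<n. x j * x k * (kap (s j) (s k) - 1/3)) = Q - S\<^sup>2 / 3"
    unfolding Q_def S_def by (simp add: right_diff_distrib sum_subtractf power2_eq_square sum_product sum_divide_distrib)
  ultimately show "0 \<le> (\<Sum>j<n. \<Sum>k<n. x j * x k * (kap (s j) (s k) - 1/3))" by simp
qed


definition mk :: "real \<Rightarrow> real \<Rightarrow> real" where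
  "mk s t = 57/100 + 3/10 * (kap s t - 1/3)"

lemma kap_diag: "kap s s = 1/2" by (simp add: kap_def)

lemma psd_mk:
  assumes s: "\<And>j. j < n \<Longrightarrow> s j \<in> {0..<1}"
  shows "psd n (\<lambda>j k. mk (s j) (s k))"
proof -
  have "psd n (\<lambda>j k. 57/100 + 3/10 * (kap (s j) (s k) - 1/3))"
    by (intro psd_add psd_const psd_scale psd_G[OF s]) auto
  then show ?thesis unfolding mk_def .
qed

lemma psd_kap_mk:
  assumes s: "\<And>j. j < n \<Longrightarrow> s j \<in> {0..<1}"
  shows "psd n (\<lambda>j k. kap (s j) (s k) - (mk (s j) (s k))\<^sup>2)"
proof -
  have e: "kap u v - (mk u v)\<^sup>2 = (1/3 - (57/100)\<^sup>2 - (3/10)\<^sup>2/180) + (1 - 2*(57/100)*(3/10) - (3/10)\<^sup>2/3) * (kap u v - 1/3) + (3/10)\<^sup>2 * Hv u v" for u v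
    unfolding mk_def Hv_def Gk_def by (simp add: power2_eq_square algebra_simps field_simps)
  have "psd n (\<lambda>j k. (1/3 - (57/100)\<^sup>2 - (3/10)\<^sup>2/180) + (1 - 2*(57/100)*(3/10) - (3/10)\<^sup>2/3) * (kap (s j) (s k) - 1/3) + (3/10)\<^sup>2 * Hv (s j) (s k))"
    by (intro psd_add psd_const psd_scale psd_G[OF s] psd_Hv[OF s]) (auto simp: power2_eq_square)
  then show ?thesis unfolding e .
qed

lemma QK_lower3:
  assumes P: "point_set_in d N P" and N: "0 < N"
  shows "((961/2500)^d / real N) * (\<Sum>j<N. w j)\<^sup>2 \<le> QK d N P w"
proof -
  have Pin: "\<And>j. j < N \<Longrightarrow> P j i \<in> {0..<1}" if "i < d" for i
    using P that unfolding point_set_in_def by auto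
  define M where "M j k = (\<Prod>i<d. mk (P j i) (P k i))" for j k
  have psdM: "psd N M" unfolding M_def
    by (rule psd_prod) (rule psd_mk[OF Pin])
  have "psd N (\<lambda>j k. (\<Prod>i<d. kap (P j i) (P k i)) - (\<Prod>i<d. (mk (P j i) (P k i))\<^sup>2))"
  proof (rule psd_prod_mono)
    fix i assume i: "i < d"
    show "psd N (\<lambda>j k. (mk (P j i) (P k i))\<^sup>2)"
      using psd_schur[OF psd_mk[OF Pin[OF i]] psd_mk[OF Pin[OF i]]] by (simp add: power2_eq_square)
    show "psd N (\<lambda>j k. kap (P j i) (P k i) - (mk (P j i) (P k i))\<^sup>2)"
      by (rule psd_kap_mk[OF Pin[OF i]])
  qed
  then have "0 \<le> (\<Sum>j<N. \<Sum>k<N. w j * w k * ((\<Prod>i<d. kap (P j i) (P k i)) - (\<Prod>i<d. (mk (P j i) (P k i))\<^sup>2)))"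
    by (rule psd_form)
  then have 1: "(\<Sum>j<N. \<Sum>k<N. w j * w k * (M j k)\<^sup>2) \<le> QK d N P w"
    unfolding QK_def M_def by (simp add: right_diff_distrib sum_subtractf power_mult_distrib prod_power_distrib)
  have diag: "M j j = (31/50)^d" for j
    unfolding M_def mk_def by (simp add: kap_diag)
  have "(\<Sum>j<N. w j * M j j)\<^sup>2 \<le> real N * (\<Sum>j<N. \<Sum>k<N. w j * w k * (M j k)\<^sup>2)"
    by (rule vybiral[OF psdM])
  moreover have "(\<Sum>j<N. w j * M j j)\<^sup>2 = (961/2500)^d * (\<Sum>j<N. w j)\<^sup>2"
    unfolding diag by (simp add: sum_distrib_right[symmetric] power_mult_distrib power2_eq_square power_mult_distrib[symmetric])
  ultimately have "(961/2500)^d * (\<Sum>j<N. w j)\<^sup>2 \<le> real N * QK d N P w"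
    using 1 N by (smt (verit) mult_left_mono of_nat_0_le_iff)
  then show ?thesis using N by (simp add: field_simps)
qed


lemma kap_nonneg: "0 \<le> kap s t"
proof -
  have "kap s t = (\<bar>s - t\<bar> - 1/2)\<^sup>2 + 1/4"
    unfolding kap_def by (simp add: power2_eq_square algebra_simps abs_mult_self_eq)
  then show ?thesis by simp
qed

lemma QK_lower_pos:
  assumes w: "\<And>j. j < N \<Longrightarrow> 0 \<le> w j"
  shows "(\<Sum>j<N. (w j)\<^sup>2) / 2^d \<le> QK d N P w"
proof -
  have "(\<Sum>j<N. (w j)\<^sup>2) / 2^d = (\<Sum>j<N. w j * w j * (\<Prod>i<d. kap (P j i) (P j i)))"
    by (simp add: kap_diag sum_divide_distrib power2_eq_square power_one_over)
  also have "\<dots> \<le> QK d N P w"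
    unfolding QK_def
  proof (rule sum_mono)
    fix j assume j: "j \<in> {..<N}"
    show "w j * w j * (\<Prod>i<d. kap (P j i) (P j i)) \<le> (\<Sum>k<N. w j * w k * (\<Prod>i<d. kap (P j i) (P k i)))"
      using j w by (intro member_le_sum[where f="\<lambda>k. w j * w k * (\<Prod>i<d. kap (P j i) (P k i))"])
        (auto intro!: mult_nonneg_nonneg prod_nonneg kap_nonneg)
  qed
  finally show ?thesis .
qed

lemma abstract_bound:
  fixes A B N Q S e L :: real
  assumes A: "0 < A" and B: "0 < B" and N: "0 < N"
    and Q: "S\<^sup>2 / (N * B) \<le> Q" and L: "L = Q - 2 * S / A + 1 / A" and Le: "L \<le> e / A"
  shows "1 - e \<le> N * B / A"
proof -
  have "0 \<le> (S * A - N * B)\<^sup>2" by simp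
  then have "2 * S * A * (N * B) \<le> S\<^sup>2 * A\<^sup>2 + (N * B)\<^sup>2"
    by (simp add: power2_eq_square algebra_simps)
  then have key: "2 * S / A \<le> S\<^sup>2 / (N * B) + N * B / A\<^sup>2"
    using A B N by (simp add: field_simps power2_eq_square)
  have "1 / A - N * B / A\<^sup>2 \<le> e / A" using Q L Le key by linarith
  moreover have "1 / A - N * B / A\<^sup>2 - e / A = (1 - N * B / A - e) / A"
    using A by (simp add: field_simps power2_eq_square)
  ultimately have "(1 - N * B / A - e) / A \<le> 0" by linarith
  then have "1 - N * B / A - e \<le> 0" using A by (simp add: divide_le_0_iff)
  then show ?thesis by linarith
qed

lemma eps_sq: "(e * 3 powr (- real d / 2))\<^sup>2 = e\<^sup>2 / 3^d"
proof -
  have "(3 powr (- real d / 2))\<^sup>2 = 3 powr (- real d)"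
    by (simp add: powr_powr[symmetric] power2_eq_square powr_add[symmetric])
  also have "\<dots> = 1 / 3^d" by (simp add: powr_minus powr_realpow divide_inverse)
  finally show ?thesis by (simp add: power_mult_distrib)
qed

lemma L2_le_sq:
  assumes "L2per d N P w \<le> e * 3 powr (- real d / 2)"
  shows "(L2per d N P w)\<^sup>2 \<le> e\<^sup>2 / 3^d"
proof -
  have "0 \<le> L2per d N P w" unfolding L2per_def by simp
  then have "(L2per d N P w)\<^sup>2 \<le> (e * 3 powr (- real d / 2))\<^sup>2"
    using assms by (intro power_mono) auto
  then show ?thesis using eps_sq[of e d] by simp
qed


lemma sum_split_mult:
  fixes F :: "nat \<Rightarrow> real"
  shows "(\<Sum>j<A*B. F j) = (\<Sum>q<B. \<Sum>r<A. F (r + A*q))"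
proof (induction B)
  case 0 then show ?case by simp
next
  case (Suc B)
  have e1: "{..<A * Suc B} = {..<A*B} \<union> {A*B..<A*B+A}" by auto
  have "(\<Sum>j<A * Suc B. F j) = (\<Sum>j<A*B. F j) + (\<Sum>j\<in>{A*B..<A*B+A}. F j)"
    unfolding e1 by (rule sum.union_disjoint) auto
  also have "(\<Sum>j\<in>{A*B..<A*B+A}. F j) = (\<Sum>r<A. F (r + A*B))"
  proof -
    have "(\<Sum>j\<in>{A*B..<A*B+A}. F j) = (\<Sum>j\<in>{0+A*B..<A+A*B}. F j)" by (simp add: add.commute)
    also have "\<dots> = (\<Sum>r\<in>{0..<A}. F (r + A*B))" by (rule sum.shift_bounds_nat_ivl)
    finally show ?thesis by (simp add: atLeast0LessThan)
  qed
  finally show ?case using Suc by simp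
qed

lemma dig_low:
  fixes m r q :: nat
  assumes m: "0 < m" and i: "i < d"
  shows "(r + m^d * q) div m^i mod m = r div m^i mod m"
proof -
  define K where "K = m^(d - Suc i) * q"
  have "m^d = m^i * m^(d-i)" using i by (metis le_add_diff_inverse less_imp_le power_add)
  also have "m^(d-i) = m * m^(d - Suc i)" using i by (metis Suc_diff_Suc power_Suc)
  finally have md: "m^d * q = m^i * (m * K)" by (simp add: K_def mult.assoc)
  have "(r + m^d * q) div m^i = m * K + r div m^i"
    unfolding md by (rule div_mult_self2) (use m in simp)
  then show ?thesis by simp
qed

lemma dig_top:
  fixes m r q :: nat
  assumes m: "0 < m" and r: "r < m^d" and q: "q < m"
  shows "(r + m^d * q) div m^d mod m = q"
proof -
  have "(r + m^d * q) div m^d = q + r div m^d" by (rule div_mult_self2) (use m in simp)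
  then show ?thesis using r q by simp
qed

lemma grid_sum:
  fixes g :: "nat \<Rightarrow> nat \<Rightarrow> real" and m :: nat
  assumes m: "0 < m"
  shows "(\<Sum>j<m^d. \<Sum>k<m^d. \<Prod>i<d. g (j div m^i mod m) (k div m^i mod m)) = (\<Sum>a<m. \<Sum>b<m. g a b)^d"
proof (induction d)
  case 0 then show ?case by simp
next
  case (Suc d)
  define F where "F j k = (\<Prod>i<Suc d. g (j div m^i mod m) (k div m^i mod m))" for j k
  define E where "E j k = (\<Prod>i<d. g (j div m^i mod m) (k div m^i mod m))" for j k
  have FE: "F (r + m^d * q) (r' + m^d * q') = E r r' * g q q'"
    if "r < m^d" "r' < m^d" "q < m" "q' < m" for r r' q q'
  proof -
    have "F (r + m^d * q) (r' + m^d * q') = (\<Prod>i<d. g ((r + m^d * q) div m^i mod m) ((r' + m^d * q') div m^i mod m)) * g q q'"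
      unfolding F_def using that m by (simp add: dig_top)
    also have "(\<Prod>i<d. g ((r + m^d * q) div m^i mod m) ((r' + m^d * q') div m^i mod m)) = E r r'"
      unfolding E_def using that m by (intro prod.cong refl) (simp add: dig_low)
    finally show ?thesis .
  qed
  have "(\<Sum>j<m^Suc d. \<Sum>k<m^Suc d. F j k) = (\<Sum>q<m. \<Sum>r<m^d. \<Sum>k<m^Suc d. F (r + m^d*q) k)"
    by (simp only: power_Suc2 sum_split_mult)
  also have "\<dots> = (\<Sum>q<m. \<Sum>r<m^d. \<Sum>q'<m. \<Sum>r'<m^d. F (r + m^d*q) (r' + m^d*q'))"
    by (simp only: power_Suc2 sum_split_mult)
  also have "\<dots> = (\<Sum>q<m. \<Sum>r<m^d. \<Sum>q'<m. \<Sum>r'<m^d. E r r' * g q q')"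
    by (intro sum.cong refl) (simp add: FE)
  also have "\<dots> = (\<Sum>q<m. \<Sum>q'<m. \<Sum>r<m^d. \<Sum>r'<m^d. E r r' * g q q')"
    by (rule sum.cong[OF refl], rule sum.swap)
  also have "\<dots> = (\<Sum>q<m. \<Sum>q'<m. g q q' * (\<Sum>r<m^d. \<Sum>r'<m^d. E r r'))"
    by (simp add: sum_distrib_left mult.commute)
  also have "\<dots> = (\<Sum>r<m^d. \<Sum>r'<m^d. E r r') * (\<Sum>q<m. \<Sum>q'<m. g q q')"
    by (simp add: sum_distrib_right mult.commute)
  finally show ?case using Suc unfolding F_def E_def by simp
qed


lemma S1: "(\<Sum>a<m. real a) = real m * (real m - 1) / 2"
  by (induction m) (auto simp: field_simps)

lemma S2: "(\<Sum>a<m. (real a)\<^sup>2) = real m * (real m - 1) * (2 * real m - 1) / 6"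
  by (induction m) (auto simp: field_simps power2_eq_square)


lemma D1sum: "(\<Sum>a<m. \<Sum>b<m. \<bar>real a - real b\<bar>) = ((real m)^3 - real m) / 3"
proof (induction m)
  case 0 then show ?case by simp
next
  case (Suc m)
  have r1: "(\<Sum>b<m. \<bar>real m - real b\<bar>) = real m * real m - real m * (real m - 1) / 2"
  proof -
    have "(\<Sum>b<m. \<bar>real m - real b\<bar>) = (\<Sum>b<m. real m - real b)"
      by (intro sum.cong refl) auto
    also have "\<dots> = real m * real m - real m * (real m - 1) / 2"
      by (simp add: sum_subtractf S1)
    finally show ?thesis .
  qed
  have r2: "(\<Sum>a<m. \<bar>real a - real m\<bar>) = real m * real m - real m * (real m - 1) / 2"
    using r1 by (simp add: abs_minus_commute)
  have "(\<Sum>a<Suc m. \<Sum>b<Suc m. \<bar>real a - real b\<bar>) = (\<Sum>a<m. (\<Sum>b<m. \<bar>real a - real b\<bar>) + \<bar>real a - real m\<bar>) + (\<Sum>b<m. \<bar>real m - real b\<bar>)"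
    by (simp only: sum.lessThan_Suc)
  also have "\<dots> = (\<Sum>a<m. \<Sum>b<m. \<bar>real a - real b\<bar>) + (\<Sum>a<m. \<bar>real a - real m\<bar>) + (\<Sum>b<m. \<bar>real m - real b\<bar>)"
    by (simp only: sum.distrib)
  also have "\<dots> = ((real m)^3 - real m) / 3 + 2 * (real m * real m - real m * (real m - 1) / 2)"
    unfolding Suc r1 r2 by simp
  also have "\<dots> = ((real (Suc m))^3 - real (Suc m)) / 3"
    by (simp add: field_simps power3_eq_cube)
  finally show ?case .
qed


lemma D2sum: "(\<Sum>a<m. \<Sum>b<m. (real a - real b)\<^sup>2) = (real m)\<^sup>2 * ((real m)\<^sup>2 - 1) / 6"
proof -
  define s1 where "s1 = (\<Sum>a<m. real a)"
  define s2 where "s2 = (\<Sum>a<m. (real a)\<^sup>2)"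
  have inner: "(\<Sum>b<m. (real a - real b)\<^sup>2) = real m * (real a)\<^sup>2 + s2 - 2 * real a * s1" for a
  proof -
    have "(\<Sum>b<m. (real a - real b)\<^sup>2) = (\<Sum>b<m. (real a)\<^sup>2 + (real b)\<^sup>2 - 2 * real a * real b)"
      by (intro sum.cong refl) (simp add: power2_eq_square algebra_simps)
    also have "\<dots> = (\<Sum>b<m. (real a)\<^sup>2) + (\<Sum>b<m. (real b)\<^sup>2) - (\<Sum>b<m. 2 * real a * real b)"
      by (simp only: sum_subtractf sum.distrib)
    also have "\<dots> = real m * (real a)\<^sup>2 + s2 - 2 * real a * s1"
      unfolding s1_def s2_def by (simp add: sum_distrib_left)
    finally show ?thesis .
  qed
  have "(\<Sum>a<m. \<Sum>b<m. (real a - real b)\<^sup>2) = (\<Sum>a<m. real m * (real a)\<^sup>2 + s2 - 2 * real a * s1)"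
    by (simp only: inner)
  also have "\<dots> = (\<Sum>a<m. real m * (real a)\<^sup>2) + (\<Sum>a<m. s2) - (\<Sum>a<m. 2 * real a * s1)"
    by (simp only: sum_subtractf sum.distrib)
  also have "\<dots> = 2 * real m * s2 - 2 * s1 * s1"
  proof -
    have h1: "(\<Sum>a<m. real m * (real a)\<^sup>2) = real m * s2" unfolding s2_def by (simp add: sum_distrib_left)
    have h2: "(\<Sum>a<m. s2) = real m * s2" by simp
    have h3: "(\<Sum>a<m. 2 * real a * s1) = 2 * s1 * (\<Sum>a<m. real a)" by (simp add: sum_distrib_left mult_ac)
    show ?thesis unfolding h1 h2 h3 s1_def[symmetric] by simp
  qed
  also have "\<dots> = (real m)\<^sup>2 * ((real m)\<^sup>2 - 1) / 6"
    unfolding s1_def s2_def S1 S2 by (simp add: field_simps power2_eq_square)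
  finally show ?thesis .
qed


lemma grid1:
  assumes m: "0 < m"
  shows "(\<Sum>a<m. \<Sum>b<m. kap (real a / real m) (real b / real m)) = (real m)\<^sup>2 / 3 + 1/6"
proof -
  have t: "kap (real a / real m) (real b / real m) = 1/2 - \<bar>real a - real b\<bar> / real m + (real a - real b)\<^sup>2 / (real m)\<^sup>2" for a b
  proof -
    have "real a / real m - real b / real m = (real a - real b) / real m" by (simp add: diff_divide_distrib)
    then show ?thesis unfolding kap_def using m by (simp add: power_divide)
  qed
  have "(\<Sum>a<m. \<Sum>b<m. kap (real a / real m) (real b / real m))
     = (\<Sum>a<m. \<Sum>b<m. 1/2 - \<bar>real a - real b\<bar> / real m + (real a - real b)\<^sup>2 / (real m)\<^sup>2)"
    by (simp only: t)
  also have "\<dots> = (\<Sum>a<m. (\<Sum>b<m. 1/2) - (\<Sum>b<m. \<bar>real a - real b\<bar>) / real m + (\<Sum>b<m. (real a - real b)\<^sup>2) / (real m)\<^sup>2)"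
    by (simp only: sum.distrib sum_subtractf sum_divide_distrib)
  also have "\<dots> = (\<Sum>a<m. \<Sum>b<m. 1/2) - (\<Sum>a<m. \<Sum>b<m. \<bar>real a - real b\<bar>) / real m + (\<Sum>a<m. \<Sum>b<m. (real a - real b)\<^sup>2) / (real m)\<^sup>2"
    by (simp only: sum.distrib sum_subtractf sum_divide_distrib)
  also have "\<dots> = (real m)\<^sup>2 / 2 - ((real m)^3 - real m) / 3 / real m + (real m)\<^sup>2 * ((real m)\<^sup>2 - 1) / 6 / (real m)\<^sup>2"
    unfolding D1sum D2sum by (simp add: power2_eq_square)
  also have "\<dots> = (real m)\<^sup>2 / 3 + 1/6"
    using m by (simp add: field_simps power2_eq_square power3_eq_cube)
  finally show ?thesis .
qed


lemma exists_m:
  fixes e :: real and d :: nat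
  assumes e: "0 < e"
  shows "\<exists>m::nat. 0 < m \<and> (1 + 1 / (2 * (real m)\<^sup>2))^d \<le> 1 + e\<^sup>2"
proof -
  have l1: "(\<lambda>m::nat. 1 + 1 / (2 * (real m)\<^sup>2)) \<longlonglongrightarrow> 1" by real_asymp
  have "(\<lambda>m::nat. (1 + 1 / (2 * (real m)\<^sup>2))^d) \<longlonglongrightarrow> 1^d" by (intro tendsto_power l1)
  then have "eventually (\<lambda>m::nat. (1 + 1 / (2 * (real m)\<^sup>2))^d < 1 + e\<^sup>2) sequentially"
    using e by (intro order_tendstoD(2)) auto
  then obtain M where M: "\<And>m. m \<ge> M \<Longrightarrow> (1 + 1 / (2 * (real m)\<^sup>2))^d < 1 + e\<^sup>2"
    unfolding eventually_sequentially by blast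
  show ?thesis using M[of "Suc M"] by (intro exI[of _ "Suc M"]) auto
qed

definition gridP :: "nat \<Rightarrow> nat \<Rightarrow> nat \<Rightarrow> real" where
  "gridP m j i = real (j div m^i mod m) / real m"

lemma gridP_in: "0 < m \<Longrightarrow> point_set_in d N (gridP m)"
  unfolding point_set_in_def gridP_def by auto

lemma QK_grid:
  assumes m: "0 < m"
  shows "QK d (m^d) (gridP m) (\<lambda>_. 1 / real (m^d)) = (1/3 + 1 / (6 * (real m)\<^sup>2))^d"
proof -
  have "QK d (m^d) (gridP m) (\<lambda>_. 1 / real (m^d)) =
        (1 / real (m^d))\<^sup>2 * (\<Sum>j<m^d. \<Sum>k<m^d. \<Prod>i<d. (\<lambda>a b. kap (real a / real m) (real b / real m)) (j div m^i mod m) (k div m^i mod m))"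
    unfolding QK_def gridP_def by (simp add: sum_distrib_left power2_eq_square)
  also have "\<dots> = (1 / real (m^d))\<^sup>2 * ((real m)\<^sup>2 / 3 + 1/6)^d"
    using grid_sum[OF m, of "\<lambda>a b. kap (real a / real m) (real b / real m)"] grid1[OF m] by simp
  also have "\<dots> = (((real m)\<^sup>2 / 3 + 1/6) / (real m)\<^sup>2)^d"
    by (simp add: power_divide power_mult_distrib[symmetric] power_mult[symmetric] mult.commute power2_eq_square)
  also have "((real m)\<^sup>2 / 3 + 1/6) / (real m)\<^sup>2 = 1/3 + 1 / (6 * (real m)\<^sup>2)"
    using m by (simp add: field_simps)
  finally show ?thesis .
qed

lemma exists_grid:
  fixes e :: real and d :: nat
  assumes e: "0 < e"
  shows "\<exists>N P. 1 \<le> N \<and> point_set_in d N P \<and> L2per d N P (\<lambda>_. 1 / real N) \<le> e * 3 powr (- real d / 2)"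
proof -
  obtain m :: nat where m: "0 < m" and mb: "(1 + 1 / (2 * (real m)\<^sup>2))^d \<le> 1 + e\<^sup>2"
    using exists_m[OF e] by blast
  define N where "N = m^d"
  have N1: "1 \<le> N" unfolding N_def using m by simp
  have Pin: "point_set_in d N (gridP m)" by (rule gridP_in[OF m])
  have S: "(\<Sum>j<N. 1 / real N) = 1" using N1 by simp
  have "(L2per d N (gridP m) (\<lambda>_. 1 / real N))\<^sup>2 = (1/3 + 1 / (6 * (real m)\<^sup>2))^d - 1 / 3^d"
    using L2_sq_formula[OF Pin, of "\<lambda>_. 1 / real N"] S unfolding N_def QK_grid[OF m] by simp
  also have "(1/3 + 1 / (6 * (real m)\<^sup>2))^d = (1 + 1 / (2 * (real m)\<^sup>2))^d / 3^d"
  proof -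
    have "1/3 + 1 / (6 * (real m)\<^sup>2) = (1 + 1 / (2 * (real m)\<^sup>2)) / 3" by (simp add: field_simps)
    then show ?thesis by (metis power_divide)
  qed
  also have "(1 + 1 / (2 * (real m)\<^sup>2))^d / 3^d - 1 / 3^d \<le> (1 + e\<^sup>2) / 3^d - 1 / 3^d"
    using mb by (intro diff_right_mono divide_right_mono) auto
  also have "\<dots> = (e * 3 powr (- real d / 2))\<^sup>2"
    unfolding eps_sq by (simp add: field_simps)
  finally have sq: "(L2per d N (gridP m) (\<lambda>_. 1 / real N))\<^sup>2 \<le> (e * 3 powr (- real d / 2))\<^sup>2" .
  have "L2per d N (gridP m) (\<lambda>_. 1 / real N) \<le> e * 3 powr (- real d / 2)"
    by (rule power2_le_imp_le[OF sq]) (use e in simp)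
  then show ?thesis using N1 Pin by blast
qed


lemma bound_eq:
  assumes N: "1 \<le> N" and P: "point_set_in d N P"
    and L: "L2per d N P (\<lambda>_. 1 / real N) \<le> e * 3 powr (- real d / 2)"
  shows "1 / (1 + e\<^sup>2) * (3/2)^d \<le> real N"
proof -
  have Np: "0 < real N" using N by simp
  have S: "(\<Sum>j<N. 1 / real N) = 1" using N by simp
  have Q: "1 / (real N * 2^d) \<le> QK d N P (\<lambda>_. 1 / real N)"
  proof -
    have "(\<Sum>j<N. (1 / real N)\<^sup>2) / 2^d \<le> QK d N P (\<lambda>_. 1 / real N)"
      by (rule QK_lower_pos) simp
    moreover have "(\<Sum>j<N. (1 / real N)\<^sup>2) / 2^d = 1 / (real N * 2^d)"
      using Np by (simp add: power2_eq_square field_simps)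
    ultimately show ?thesis by simp
  qed
  have "(L2per d N P (\<lambda>_. 1 / real N))\<^sup>2 = QK d N P (\<lambda>_. 1 / real N) - 2 * 1 / 3^d + 1 / 3^d"
    using L2_sq_formula[OF P] S by simp
  moreover have "(L2per d N P (\<lambda>_. 1 / real N))\<^sup>2 \<le> e\<^sup>2 / 3^d" by (rule L2_le_sq[OF L])
  ultimately have "1 / (real N * 2^d) \<le> (1 + e\<^sup>2) / 3^d" using Q by (simp add: add_divide_distrib)
  then have "3^d \<le> (1 + e\<^sup>2) * (real N * 2^d)"
    using Np by (simp add: field_simps)
  then have h: "3^d \<le> real N * (2^d * (1 + e\<^sup>2))" by (simp add: mult_ac)
  have K: "0 < (2::real)^d * (1 + e\<^sup>2)" by (simp add: add_pos_nonneg)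
  have "3^d / (2^d * (1 + e\<^sup>2)) \<le> real N" using h by (simp add: pos_divide_le_eq[OF K])
  moreover have "1 / (1 + e\<^sup>2) * (3/2)^d = 3^d / (2^d * (1 + e\<^sup>2))"
    by (simp add: power_divide)
  ultimately show ?thesis by simp
qed

lemma bound_pos:
  assumes N: "1 \<le> N" and P: "point_set_in d N P" and w: "\<forall>j<N. 0 < w j"
    and L: "L2per d N P w \<le> e * 3 powr (- real d / 2)"
  shows "(1 - e\<^sup>2) * (3/2)^d \<le> real N"
proof -
  have Np: "0 < real N" using N by simp
  have Q: "(\<Sum>j<N. w j)\<^sup>2 / (real N * 2^d) \<le> QK d N P w"
  proof -
    have "(\<Sum>j<N. (w j)\<^sup>2) / 2^d \<le> QK d N P w"
      by (rule QK_lower_pos) (use w in auto)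
    moreover have "(\<Sum>j<N. w j)\<^sup>2 \<le> real N * (\<Sum>j<N. (w j)\<^sup>2)" by (rule cs_sum)
    then have "(\<Sum>j<N. w j)\<^sup>2 / (real N * 2^d) \<le> (\<Sum>j<N. (w j)\<^sup>2) / 2^d"
      using Np by (simp add: field_simps)
    ultimately show ?thesis by linarith
  qed
  have "1 - e\<^sup>2 \<le> real N * 2^d / 3^d"
    by (rule abstract_bound[OF _ _ Np Q L2_sq_formula[OF P] L2_le_sq[OF L]]) auto
  then show ?thesis by (simp add: power_divide field_simps)
qed

lemma bound_gen:
  assumes N: "1 \<le> N" and P: "point_set_in d N P"
    and L: "L2per d N P w \<le> e * 3 powr (- real d / 2)"
  shows "(1 - e\<^sup>2) * (2883/2500)^d \<le> real N"
proof -
  have Np: "0 < real N" using N by simp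
  have Q: "(\<Sum>j<N. w j)\<^sup>2 / (real N * (2500/961)^d) \<le> QK d N P w"
    using QK_lower3[OF P, of w] N by (simp add: power_divide field_simps)
  have "1 - e\<^sup>2 \<le> real N * (2500/961)^d / 3^d"
    by (rule abstract_bound[OF _ _ Np Q L2_sq_formula[OF P] L2_le_sq[OF L]]) auto
  also have "real N * (2500/961)^d / 3^d = real N / (2883/2500)^d"
    by (simp add: power_divide field_simps power_mult_distrib[symmetric])
  finally show ?thesis by (simp add: field_simps)
qed


theorem theorem2:
  shows "(\<forall>(\<epsilon>::real) (d::nat). 0 < \<epsilon> \<and> \<epsilon> < 1 \<and> 1 \<le> d \<longrightarrow>
            real (N2per \<epsilon> d) \<ge> 1 / (1 + \<epsilon>\<^sup>2) * (3/2) ^ d \<and>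
            real (N2per_wpos \<epsilon> d) \<ge> (1 - \<epsilon>\<^sup>2) * (3/2) ^ d)
       \<and> (\<forall>\<epsilon>0::real. 0 < \<epsilon>0 \<and> \<epsilon>0 < 1 \<longrightarrow>
            (\<exists>c::real. c > 0 \<and> (\<forall>(d::nat) (\<epsilon>::real). 1 \<le> d \<and> 0 < \<epsilon> \<and> \<epsilon> < \<epsilon>0 \<longrightarrow>
                real (N2per_w \<epsilon> d) \<ge> c * 1.0628 ^ d)))"
proof (intro conjI allI impI)
  fix \<epsilon> :: real and d :: nat
  assume h: "0 < \<epsilon> \<and> \<epsilon> < 1 \<and> 1 \<le> d"
  then have e: "0 < \<epsilon>" by simp
  obtain N0 P0 where N0: "1 \<le> N0" "point_set_in d N0 P0" "L2per d N0 P0 (\<lambda>_. 1 / real N0) \<le> \<epsilon> * 3 powr (- real d / 2)"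
    using exists_grid[OF e, of d] by blast
  have ex1: "\<exists>N. 1 \<le> N \<and> (\<exists>P. point_set_in d N P \<and> L2per d N P (\<lambda>_. 1 / real N) \<le> \<epsilon> * 3 powr (- real d / 2))"
    using N0 by blast
  from LeastI_ex[OF ex1] obtain P where
    "1 \<le> N2per \<epsilon> d" "point_set_in d (N2per \<epsilon> d) P" "L2per d (N2per \<epsilon> d) P (\<lambda>_. 1 / real (N2per \<epsilon> d)) \<le> \<epsilon> * 3 powr (- real d / 2)"
    unfolding N2per_def by blast
  then show "real (N2per \<epsilon> d) \<ge> 1 / (1 + \<epsilon>\<^sup>2) * (3/2) ^ d" by (rule bound_eq)
  have ex2: "\<exists>N. 1 \<le> N \<and> (\<exists>P w. point_set_in d N P \<and> (\<forall>j<N. 0 < w j) \<and> L2per d N P w \<le> \<epsilon> * 3 powr (- real d / 2))"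
    using N0 by (intro exI[of _ N0] conjI exI[of _ P0] exI[of _ "\<lambda>_. 1 / real N0"]) auto
  from LeastI_ex[OF ex2] obtain P w where
    "1 \<le> N2per_wpos \<epsilon> d" "point_set_in d (N2per_wpos \<epsilon> d) P" "\<forall>j<N2per_wpos \<epsilon> d. 0 < w j"
    "L2per d (N2per_wpos \<epsilon> d) P w \<le> \<epsilon> * 3 powr (- real d / 2)"
    unfolding N2per_wpos_def by blast
  then show "real (N2per_wpos \<epsilon> d) \<ge> (1 - \<epsilon>\<^sup>2) * (3/2) ^ d" by (rule bound_pos)
next
  fix \<epsilon>0 :: real
  assume h0: "0 < \<epsilon>0 \<and> \<epsilon>0 < 1"
  show "\<exists>c::real. c > 0 \<and> (\<forall>(d::nat) (\<epsilon>::real). 1 \<le> d \<and> 0 < \<epsilon> \<and> \<epsilon> < \<epsilon>0 \<longrightarrow>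
                real (N2per_w \<epsilon> d) \<ge> c * 1.0628 ^ d)"
  proof (intro exI[of _ "1 - \<epsilon>0\<^sup>2"] conjI allI impI)
    show "0 < 1 - \<epsilon>0\<^sup>2" using h0 by (simp add: power_less_one_iff abs_less_iff)
  next
    fix d :: nat and \<epsilon> :: real
    assume h: "1 \<le> d \<and> 0 < \<epsilon> \<and> \<epsilon> < \<epsilon>0"
    then have e: "0 < \<epsilon>" by simp
    obtain N0 P0 where N0: "1 \<le> N0" "point_set_in d N0 P0" "L2per d N0 P0 (\<lambda>_. 1 / real N0) \<le> \<epsilon> * 3 powr (- real d / 2)"
      using exists_grid[OF e, of d] by blast
    have ex3: "\<exists>N. 1 \<le> N \<and> (\<exists>P w. point_set_in d N P \<and> L2per d N P w \<le> \<epsilon> * 3 powr (- real d / 2))"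
      using N0 by blast
    from LeastI_ex[OF ex3] obtain P w where
      "1 \<le> N2per_w \<epsilon> d" "point_set_in d (N2per_w \<epsilon> d) P"
      "L2per d (N2per_w \<epsilon> d) P w \<le> \<epsilon> * 3 powr (- real d / 2)"
      unfolding N2per_w_def by blast
    then have b: "(1 - \<epsilon>\<^sup>2) * (2883/2500)^d \<le> real (N2per_w \<epsilon> d)" by (rule bound_gen)
    have "\<epsilon>\<^sup>2 \<le> \<epsilon>0\<^sup>2" using h by (intro power_mono) auto
    then have c1: "1 - \<epsilon>0\<^sup>2 \<le> 1 - \<epsilon>\<^sup>2" by simp
    have c0: "0 \<le> 1 - \<epsilon>0\<^sup>2" using h0 by (simp add: power_le_one abs_le_iff)
    have p: "(1.0628::real)^d \<le> (2883/2500)^d" by (intro power_mono) auto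
    have "(1 - \<epsilon>0\<^sup>2) * 1.0628 ^ d \<le> (1 - \<epsilon>\<^sup>2) * (2883/2500)^d"
      using c0 c1 p by (intro mult_mono) auto
    then show "(1 - \<epsilon>0\<^sup>2) * 1.0628 ^ d \<le> real (N2per_w \<epsilon> d)" using b by linarith
  qed
qed

end
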